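(* Let $N\ge 1$, $0<s<1$ and $1<p<\infty$ be such that $s\,p>N$. For every $r>0$, $x_0\in\mathbb{R}^N$ and $\varphi\in C^1(\overline{B_r(x_0)})$ with $\varphi(x_0)=0$, we have \[ |\varphi(x)|\le \left(\frac{1}{\omega_N\,\Lambda_{s,p}(B_1(0))}\right)^\frac{1}{p}\,\frac{\big(r-|x-x_0|\big)^s+r^s}{\big(r-|x-x_0|\big)^\frac{N}{p}}\,[\varphi]_{W^{s,p}(B_r(x_0))},\quad \mbox{ for every } x\in B_r(x_0). \]
   Context: $\omega_N$ is the Lebesgue measure of the unit ball of $\mathbb{R}^N$. For an open set $\Omega$, $[\varphi]_{W^{s,p}(\Omega)}=\left(\iint_{\Omega\times\Omega}\frac{|\varphi(x)-\varphi(y)|^p}{|x-y|^{N+s\,p}}dx\,dy\right)^{1/p}$. For a ball $B_r(x_0)$, $\Lambda_{s,p}(B_r(x_0))=\inf\{[\varphi]^p_{W^{s,p}(B_r(x_0))}:\varphi\in C^1(\overline{B_r(x_0)}),\ \|\varphi\|_{L^p(B_r(x_0))}=1,\ \varphi(x_0)=0\}$. *)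

theory Defs
  imports "HOL-Analysis.Analysis"
begin

definition omega :: "'a::euclidean_space itself \<Rightarrow> real" where
  "omega _ = measure lborel (ball (0::'a) 1)"

definition gagliardo_pow :: "real \<Rightarrow> real \<Rightarrow> 'a::euclidean_space set \<Rightarrow> ('a \<Rightarrow> real) \<Rightarrow> ennreal" where
  "gagliardo_pow s p \<Omega> \<phi> =
     (\<integral>\<^sup>+ z. indicator (\<Omega> \<times> \<Omega>) z *
        ennreal (\<bar>\<phi> (fst z) - \<phi> (snd z)\<bar> powr p /
                 norm (fst z - snd z) powr (real DIM('a) + s * p)) \<partial>(lborel \<Otimes>\<^sub>M lborel))"

definition gagliardo :: "real \<Rightarrow> real \<Rightarrow> 'a::euclidean_space set \<Rightarrow> ('a \<Rightarrow> real) \<Rightarrow> real" where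
  "gagliardo s p \<Omega> \<phi> = enn2real (gagliardo_pow s p \<Omega> \<phi>) powr (1 / p)"

definition C1_closure :: "'a::euclidean_space set \<Rightarrow> ('a \<Rightarrow> real) \<Rightarrow> bool" where
  "C1_closure S \<phi> \<longleftrightarrow> continuous_on (closure S) \<phi> \<and>
     (\<exists>D :: 'a \<Rightarrow> ('a \<Rightarrow>\<^sub>L real).
        (\<forall>x\<in>S. (\<phi> has_derivative blinfun_apply (D x)) (at x)) \<and> continuous_on (closure S) D)"

definition Lp_norm :: "real \<Rightarrow> 'a::euclidean_space set \<Rightarrow> ('a \<Rightarrow> real) \<Rightarrow> real" where
  "Lp_norm p \<Omega> \<phi> = enn2real (\<integral>\<^sup>+ x. indicator \<Omega> x * ennreal (\<bar>\<phi> x\<bar> powr p) \<partial>lborel) powr (1 / p)"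

definition Lambda :: "real \<Rightarrow> real \<Rightarrow> 'a::euclidean_space \<Rightarrow> real \<Rightarrow> real" where
  "Lambda s p x0 r = Inf {gagliardo s p (ball x0 r) \<phi> powr p | \<phi>.
       C1_closure (ball x0 r) \<phi> \<and> Lp_norm p (ball x0 r) \<phi> = 1 \<and> \<phi> x0 = 0}"

end

theory Submission
  imports Defs
begin

lemma nn_integral_affine_eucl:
  fixes f :: "'b::euclidean_space \<Rightarrow> ennreal" and c :: real
  assumes [measurable]: "f \<in> borel_measurable borel" and c: "c \<noteq> 0"
  shows "(\<integral>\<^sup>+x. f x \<partial>lborel) = ennreal (\<bar>c\<bar>^DIM('b)) * (\<integral>\<^sup>+x. f (t + c *\<^sub>R x) \<partial>lborel)"
  by (subst lborel_affine[OF c, of t]) (simp add: nn_integral_density nn_integral_distr nn_integral_cmult ennreal_power)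



lemma powr_convex0:
  fixes p t x y :: real
  assumes p: "p \<ge> 1" and t: "0 \<le> t" "t \<le> 1" and x: "x \<ge> 0" and y: "y \<ge> 0"
  shows "((1 - t) * x + t * y) powr p \<le> (1 - t) * x powr p + t * y powr p"
proof -
  have tp: "u powr p \<le> u" if "0 \<le> u" "u \<le> 1" for u :: real
  proof (cases "u = 0")
    case True then show ?thesis by simp
  next
    case False
    then have "u powr p \<le> u powr 1" using that p by (intro powr_mono') auto
    then show ?thesis using that False by simp
  qed
  show ?thesis
  proof (cases "x = 0 \<or> y = 0")
    case True
    then show ?thesis
    proof
      assume [simp]: "x = 0"
      have "(t * y) powr p = t powr p * y powr p" using t y by (simp add: powr_mult)
      also have "\<dots> \<le> t * y powr p" using tp[OF t] by (intro mult_right_mono) auto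
      finally show ?thesis using p by simp
    next
      assume [simp]: "y = 0"
      have "((1-t) * x) powr p = (1-t) powr p * x powr p" using t x by (simp add: powr_mult)
      also have "\<dots> \<le> (1-t) * x powr p" using tp[of "1-t"] t by (intro mult_right_mono) auto
      finally show ?thesis using p by simp
    qed
  next
    case False
    with x y have "x > 0" "y > 0" by auto
    then show ?thesis
      using convex_onD[OF powr_convex[OF p], of t x y] t by simp
  qed
qed

lemma pow_ineq:
  fixes p a b x y :: real
  assumes p: "p \<ge> 1" and a: "a > 0" and b: "b > 0" and x: "x \<ge> 0" and y: "y \<ge> 0"
  shows "(x + y) powr p \<le> (a + b) powr (p - 1) * (x powr p / a powr (p - 1) + y powr p / b powr (p - 1))"
proof -
  define t where "t = b / (a + b)"
  have t: "0 \<le> t" "t \<le> 1" using a b by (auto simp: t_def)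
  have 1: "1 - t = a / (a + b)" using a b by (simp add: t_def field_simps)
  have "(1 - t) * (x / a) = x / (a + b)" unfolding 1 using a b by simp
  moreover have "t * (y / b) = y / (a + b)" unfolding t_def using a b by simp
  ultimately have "x + y = (a + b) * ((1 - t) * (x / a) + t * (y / b))"
    using a b by (simp add: add_divide_distrib[symmetric])
  then have "(x + y) powr p = (a + b) powr p * ((1 - t) * (x / a) + t * (y / b)) powr p"
    using a b x y t by (simp add: powr_mult)
  also have "\<dots> \<le> (a + b) powr p * ((1 - t) * (x / a) powr p + t * (y / b) powr p)"
    using powr_convex0[OF p t, of "x/a" "y/b"] a b x y by (intro mult_left_mono) auto
  also have "\<dots> = (a + b) powr (p - 1) * (x powr p / a powr (p - 1) + y powr p / b powr (p - 1))"
  proof -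
    have e1: "(a + b) powr p = (a + b) powr (p - 1) * (a + b)" using a b by (simp add: powr_diff)
    have e2: "(x / a) powr p = x powr p / (a powr (p - 1) * a)" using a x by (simp add: powr_divide powr_diff)
    have e3: "(y / b) powr p = y powr p / (b powr (p - 1) * b)" using b y by (simp add: powr_divide powr_diff)
    have gen: "(a + b) * P * ((a / (a + b)) * (X / (A * a)) + (b / (a + b)) * (Y / (B * b))) = P * (X / A + Y / B)"
      if "A > 0" "B > 0" for P X Y A B :: real
    proof -
      have "a + b > 0" using a b by simp
      have h1: "(a + b) * P * ((a/(a+b)) * U + (b/(a+b)) * W) = P * (a * U + b * W)" for U W
      proof -
        have "(a/(a+b)) * U + (b/(a+b)) * W = (a * U + b * W) / (a + b)"
          by (simp add: add_divide_distrib)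
        then show ?thesis using \<open>a + b > 0\<close> by simp
      qed
      have e: "a * (X / (A * a)) = X / A" "b * (Y / (B * b)) = Y / B" using a b by auto
      show ?thesis unfolding h1 e ..
    qed
    show ?thesis unfolding e1 e2 e3 1 unfolding t_def using a b
      by (subst gen[symmetric]) (auto simp: mult.assoc)
  qed
  finally show ?thesis .
qed


lemma minkowski_nn:
  fixes f g h :: "'b \<Rightarrow> real" and M :: "'b measure" and p :: real
  assumes p: "p \<ge> 1"
    and gm[measurable]: "g \<in> borel_measurable M" and hm[measurable]: "h \<in> borel_measurable M"
    and fgh: "\<And>x. x \<in> space M \<Longrightarrow> 0 \<le> f x \<and> f x \<le> g x + h x"
    and g0: "\<And>x. x \<in> space M \<Longrightarrow> 0 \<le> g x" and h0: "\<And>x. x \<in> space M \<Longrightarrow> 0 \<le> h x"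
    and gfin: "(\<integral>\<^sup>+x. ennreal (g x powr p) \<partial>M) < \<infinity>"
    and hfin: "(\<integral>\<^sup>+x. ennreal (h x powr p) \<partial>M) < \<infinity>"
  shows "(\<integral>\<^sup>+x. ennreal (f x powr p) \<partial>M) < \<infinity> \<and>
    enn2real (\<integral>\<^sup>+x. ennreal (f x powr p) \<partial>M) powr (1/p) \<le>
      enn2real (\<integral>\<^sup>+x. ennreal (g x powr p) \<partial>M) powr (1/p) +
      enn2real (\<integral>\<^sup>+x. ennreal (h x powr p) \<partial>M) powr (1/p)"
proof -
  define Ig where "Ig = enn2real (\<integral>\<^sup>+x. ennreal (g x powr p) \<partial>M)"
  define Ih where "Ih = enn2real (\<integral>\<^sup>+x. ennreal (h x powr p) \<partial>M)"
  define A where "A = Ig powr (1/p)"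
  define B where "B = Ih powr (1/p)"
  have Ig0: "Ig \<ge> 0" and Ih0: "Ih \<ge> 0" by (auto simp: Ig_def Ih_def)
  have IgE: "(\<integral>\<^sup>+x. ennreal (g x powr p) \<partial>M) = ennreal Ig"
    using gfin by (simp add: Ig_def less_top)
  have IhE: "(\<integral>\<^sup>+x. ennreal (h x powr p) \<partial>M) = ennreal Ih"
    using hfin by (simp add: Ih_def less_top)
  have A0: "A \<ge> 0" and B0: "B \<ge> 0" by (auto simp: A_def B_def)
  have ApE: "A powr p = Ig" using Ig0 p by (simp add: A_def powr_powr)
  have BpE: "B powr p = Ih" using Ih0 p by (simp add: B_def powr_powr)
  have key: "(\<integral>\<^sup>+x. ennreal (f x powr p) \<partial>M) \<le> ennreal ((A + B + 2 * e) powr p)" if e: "e > 0" for e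
  proof -
    define a where "a = A + e"
    define b where "b = B + e"
    have a: "a > 0" and b: "b > 0" using A0 B0 e by (auto simp: a_def b_def)
    define K1 where "K1 = (a + b) powr (p - 1) / a powr (p - 1)"
    define K2 where "K2 = (a + b) powr (p - 1) / b powr (p - 1)"
    have K1: "K1 \<ge> 0" and K2: "K2 \<ge> 0" by (auto simp: K1_def K2_def)
    have "(\<integral>\<^sup>+x. ennreal (f x powr p) \<partial>M) \<le>
        (\<integral>\<^sup>+x. ennreal K1 * ennreal (g x powr p) + ennreal K2 * ennreal (h x powr p) \<partial>M)"
    proof (rule nn_integral_mono)
      fix x assume x: "x \<in> space M"
      have "f x powr p \<le> (g x + h x) powr p"
        using fgh[OF x] p by (intro powr_mono2) auto
      also have "\<dots> \<le> (a + b) powr (p - 1) * (g x powr p / a powr (p - 1) + h x powr p / b powr (p - 1))"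
        using pow_ineq[OF p a b g0[OF x] h0[OF x]] .
      also have "\<dots> = K1 * g x powr p + K2 * h x powr p"
        by (simp add: K1_def K2_def field_simps)
      finally show "ennreal (f x powr p) \<le> ennreal K1 * ennreal (g x powr p) + ennreal K2 * ennreal (h x powr p)"
        using K1 K2 by (simp add: ennreal_plus[symmetric] ennreal_mult[symmetric] del: ennreal_plus)
    qed
    also have "\<dots> = ennreal K1 * ennreal Ig + ennreal K2 * ennreal Ih"
      by (simp add: nn_integral_add nn_integral_cmult IgE IhE)
    also have "\<dots> = ennreal (K1 * Ig + K2 * Ih)"
      using K1 K2 Ig0 Ih0 by (simp add: ennreal_plus[symmetric] ennreal_mult[symmetric] del: ennreal_plus)
    also have "K1 * Ig + K2 * Ih \<le> (a + b) powr (p - 1) * a + (a + b) powr (p - 1) * b"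
    proof -
      have "K1 * Ig \<le> (a + b) powr (p - 1) * a"
      proof -
        have "Ig \<le> a powr p" unfolding ApE[symmetric] using A0 p by (intro powr_mono2) (auto simp: a_def less_imp_le[OF e])
        then have "Ig / a powr (p - 1) \<le> a powr p / a powr (p - 1)"
          by (rule divide_right_mono) simp
        also have "a powr p / a powr (p - 1) = a" using a by (simp add: powr_diff[symmetric])
        finally have "(a + b) powr (p - 1) * (Ig / a powr (p - 1)) \<le> (a + b) powr (p - 1) * a"
          by (intro mult_left_mono) auto
        then show ?thesis by (simp add: K1_def)
      qed
      moreover have "K2 * Ih \<le> (a + b) powr (p - 1) * b"
      proof -
        have "Ih \<le> b powr p" unfolding BpE[symmetric] using B0 p by (intro powr_mono2) (auto simp: b_def less_imp_le[OF e])
        then have "Ih / b powr (p - 1) \<le> b powr p / b powr (p - 1)"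
          by (rule divide_right_mono) simp
        also have "b powr p / b powr (p - 1) = b" using b by (simp add: powr_diff[symmetric])
        finally have "(a + b) powr (p - 1) * (Ih / b powr (p - 1)) \<le> (a + b) powr (p - 1) * b"
          by (intro mult_left_mono) auto
        then show ?thesis by (simp add: K2_def)
      qed
      ultimately show ?thesis by linarith
    qed
    then have "ennreal (K1 * Ig + K2 * Ih) \<le> ennreal ((a + b) powr (p - 1) * a + (a + b) powr (p - 1) * b)"
      by (rule ennreal_leI)
    also have "(a + b) powr (p - 1) * a + (a + b) powr (p - 1) * b = (A + B + 2 * e) powr p"
    proof -
      have "(a + b) powr (p - 1) * a + (a + b) powr (p - 1) * b = (a + b) powr (p - 1) * (a + b)"
        by (simp add: distrib_left)
      also have "\<dots> = (a + b) powr p" using a b by (simp add: powr_diff)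
      finally have "(a + b) powr (p - 1) * a + (a + b) powr (p - 1) * b = (a + b) powr p" .
      moreover have "a + b = A + B + 2 * e" by (simp add: a_def b_def)
      ultimately show ?thesis by simp
    qed
    finally show ?thesis .
  qed
  have fin: "(\<integral>\<^sup>+x. ennreal (f x powr p) \<partial>M) < \<infinity>"
    using key[of 1] by (simp add: le_less_trans)
  define F where "F = enn2real (\<integral>\<^sup>+x. ennreal (f x powr p) \<partial>M)"
  have F0: "F \<ge> 0" by (simp add: F_def)
  have FE: "(\<integral>\<^sup>+x. ennreal (f x powr p) \<partial>M) = ennreal F" using fin by (simp add: F_def less_top)
  have "F powr (1/p) \<le> A + B"
  proof (rule field_le_epsilon)
    fix e :: real assume e: "e > 0"
    have "ennreal F \<le> ennreal ((A + B + 2 * (e/2)) powr p)" using key[of "e/2"] e FE by simp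
    then have "F \<le> (A + B + e) powr p" using F0 by (simp add: ennreal_le_iff)
    then have "F powr (1/p) \<le> ((A + B + e) powr p) powr (1/p)"
      using F0 p by (intro powr_mono2) auto
    also have "\<dots> = A + B + e" using A0 B0 e p by (simp add: powr_powr)
    finally show "F powr (1/p) \<le> A + B + e" .
  qed
  then show ?thesis using fin by (simp add: F_def A_def B_def Ig_def Ih_def)
qed



definition Lpow :: "real \<Rightarrow> 'a::euclidean_space set \<Rightarrow> ('a \<Rightarrow> real) \<Rightarrow> ennreal" where
  "Lpow p S \<psi> = (\<integral>\<^sup>+ x. indicator S x * ennreal (\<bar>\<psi> x\<bar> powr p) \<partial>lborel)"

lemma Lp_norm_Lpow: "Lp_norm p S \<psi> = enn2real (Lpow p S \<psi>) powr (1/p)"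
  by (simp add: Lp_norm_def Lpow_def)

lemma restrict_meas:
  fixes \<psi> :: "'a::euclidean_space \<Rightarrow> real"
  assumes "S \<in> sets borel" "continuous_on S \<psi>"
  shows "(\<lambda>x. if x \<in> S then \<psi> x else 0) \<in> borel_measurable borel"
  using assms by (intro borel_measurable_continuous_on_if) auto

lemma Lpow_meas:
  fixes \<psi> :: "'a::euclidean_space \<Rightarrow> real"
  assumes S: "S \<in> sets borel" and c: "continuous_on S \<psi>"
  shows "(\<lambda>x. indicator S x * ennreal (\<bar>\<psi> x\<bar> powr p)) \<in> borel_measurable borel"
proof -
  define \<psi>r where "\<psi>r = (\<lambda>x. if x \<in> S then \<psi> x else 0)"
  have [measurable]: "\<psi>r \<in> borel_measurable borel" unfolding \<psi>r_def by (rule restrict_meas[OF S c])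
  have [measurable]: "S \<in> sets borel" by (rule S)
  have "(\<lambda>x. indicator S x * ennreal (\<bar>\<psi> x\<bar> powr p)) = (\<lambda>x. indicator S x * ennreal (\<bar>\<psi>r x\<bar> powr p))"
    by (auto simp: \<psi>r_def indicator_def)
  also have "\<dots> \<in> borel_measurable borel" by measurable
  finally show ?thesis .
qed

lemma G_integrand_meas:
  fixes \<psi> :: "'a::euclidean_space \<Rightarrow> real"
  assumes S: "S \<in> sets borel" and c: "continuous_on S \<psi>"
  shows "(\<lambda>z. indicator (S \<times> S) z * ennreal (\<bar>\<psi> (fst z) - \<psi> (snd z)\<bar> powr p /
                 norm (fst z - snd z) powr q)) \<in> borel_measurable (lborel \<Otimes>\<^sub>M lborel)"
proof -
  define \<psi>r where "\<psi>r = (\<lambda>x. if x \<in> S then \<psi> x else 0)"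
  have [measurable]: "\<psi>r \<in> borel_measurable borel" unfolding \<psi>r_def by (rule restrict_meas[OF S c])
  have [measurable]: "S \<in> sets borel" by (rule S)
  have "(\<lambda>z. indicator (S \<times> S) z * ennreal (\<bar>\<psi> (fst z) - \<psi> (snd z)\<bar> powr p /
                 norm (fst z - snd z) powr q)) = (\<lambda>z. indicator (S \<times> S) z * ennreal (\<bar>\<psi>r (fst z) - \<psi>r (snd z)\<bar> powr p /
                 norm (fst z - snd z) powr q))"
    by (auto simp: \<psi>r_def indicator_def)
  also have "\<dots> \<in> borel_measurable (lborel \<Otimes>\<^sub>M lborel)" by measurable
  finally show ?thesis .
qed

lemma ball_affine_iff:
  fixes c z :: "'a::euclidean_space"
  assumes "\<rho> > 0"
  shows "c + \<rho> *\<^sub>R z \<in> ball c \<rho> \<longleftrightarrow> z \<in> ball 0 1"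
  using assms by (simp add: dist_norm)

lemma dist_affine_iff [simp]:
  fixes c z :: "'a::euclidean_space"
  assumes "\<rho> > 0"
  shows "dist c (c + \<rho> *\<^sub>R z) < \<rho> \<longleftrightarrow> norm z < 1"
  using assms by (simp add: dist_norm)

lemma Lpow_scale:
  fixes \<psi> :: "'a::euclidean_space \<Rightarrow> real"
  assumes r: "\<rho> > 0" and c: "continuous_on (ball x0 \<rho>) \<psi>"
  shows "Lpow p (ball x0 \<rho>) \<psi> = ennreal (\<rho> ^ DIM('a)) * Lpow p (ball 0 1) (\<lambda>z. \<psi> (x0 + \<rho> *\<^sub>R z))"
proof -
  have m: "(\<lambda>x. indicator (ball x0 \<rho>) x * ennreal (\<bar>\<psi> x\<bar> powr p)) \<in> borel_measurable borel"
    by (rule Lpow_meas[OF _ c]) auto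
  show ?thesis
    unfolding Lpow_def
    apply (subst nn_integral_affine_eucl[OF m, of \<rho> x0])
    using r apply simp
    using r apply (simp add: indicator_def ball_affine_iff)
    done
qed

lemma G_lborel:
  "gagliardo_pow s p S (\<psi>::'a::euclidean_space \<Rightarrow> real) = (\<integral>\<^sup>+ z. indicator (S \<times> S) z *
        ennreal (\<bar>\<psi> (fst z) - \<psi> (snd z)\<bar> powr p /
                 norm (fst z - snd z) powr (real DIM('a) + s * p)) \<partial>lborel)"
  by (simp add: gagliardo_pow_def lborel_prod)

lemma G_scale:
  fixes \<psi> :: "'a::euclidean_space \<Rightarrow> real"
  assumes r: "\<rho> > 0" and c: "continuous_on (ball x0 \<rho>) \<psi>"
  shows "gagliardo_pow s p (ball x0 \<rho>) \<psi> =
    ennreal (\<rho> powr (real DIM('a) - s * p)) * gagliardo_pow s p (ball 0 1) (\<lambda>z. \<psi> (x0 + \<rho> *\<^sub>R z))"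
proof -
  let ?q = "real DIM('a) + s * p"
  have m: "(\<lambda>z. indicator (ball x0 \<rho> \<times> ball x0 \<rho>) z * ennreal (\<bar>\<psi> (fst z) - \<psi> (snd z)\<bar> powr p /
                 norm (fst z - snd z) powr ?q)) \<in> borel_measurable (borel :: ('a \<times> 'a) measure)"
    using G_integrand_meas[OF _ c, of p ?q] by (simp add: lborel_prod)
  have pt: "indicator (ball x0 \<rho> \<times> ball x0 \<rho>) ((x0, x0) + \<rho> *\<^sub>R z) *
        ennreal (\<bar>\<psi> (fst ((x0, x0) + \<rho> *\<^sub>R z)) - \<psi> (snd ((x0, x0) + \<rho> *\<^sub>R z))\<bar> powr p /
                 norm (fst ((x0, x0) + \<rho> *\<^sub>R z) - snd ((x0, x0) + \<rho> *\<^sub>R z)) powr ?q)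
     = ennreal (\<rho> powr (- ?q)) * (indicator (ball 0 1 \<times> ball 0 1) z *
        ennreal (\<bar>\<psi> (x0 + \<rho> *\<^sub>R fst z) - \<psi> (x0 + \<rho> *\<^sub>R snd z)\<bar> powr p /
                 norm (fst z - snd z) powr ?q))" for z :: "'a \<times> 'a"
  proof -
    obtain z1 z2 where z: "z = (z1, z2)" by (cases z)
    have n: "norm (x0 + \<rho> *\<^sub>R z1 - (x0 + \<rho> *\<^sub>R z2)) = \<rho> * norm (z1 - z2)"
      using r by (simp add: scaleR_diff_right[symmetric])
    have e1: "norm (x0 + \<rho> *\<^sub>R z1 - (x0 + \<rho> *\<^sub>R z2)) powr ?q = \<rho> powr ?q * norm (z1 - z2) powr ?q"
      unfolding n using r by (simp add: powr_mult)
    have gen: "X / (\<rho> powr ?q * Y) = \<rho> powr (- ?q) * (X / Y)" for X Y :: real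
    proof -
      have "\<rho> powr (- ?q) = inverse (\<rho> powr ?q)" by (rule powr_minus)
      then show ?thesis by (simp add: divide_inverse inverse_mult_distrib mult_ac)
    qed
    have i1: "indicator (ball x0 \<rho> \<times> ball x0 \<rho>) ((x0, x0) + \<rho> *\<^sub>R z) = (indicator (ball 0 1 \<times> ball 0 1) z :: ennreal)"
      using r by (simp add: z indicator_def ball_affine_iff)
    have f1: "fst ((x0, x0) + \<rho> *\<^sub>R z) = x0 + \<rho> *\<^sub>R z1" "snd ((x0, x0) + \<rho> *\<^sub>R z) = x0 + \<rho> *\<^sub>R z2"
      "fst z = z1" "snd z = z2" by (simp_all add: z)
    have ge: "\<rho> powr (- ?q) \<ge> 0" by simp
    show ?thesis unfolding i1 f1 e1 gen ennreal_mult'[OF ge] by (simp only: mult_ac)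
  qed
  have "gagliardo_pow s p (ball x0 \<rho>) \<psi> = ennreal (\<bar>\<rho>\<bar> ^ DIM('a \<times> 'a)) *
     (\<integral>\<^sup>+ z. ennreal (\<rho> powr (- ?q)) * (indicator (ball 0 1 \<times> ball 0 1) z *
        ennreal (\<bar>\<psi> (x0 + \<rho> *\<^sub>R fst z) - \<psi> (x0 + \<rho> *\<^sub>R snd z)\<bar> powr p /
                 norm (fst z - snd z) powr ?q)) \<partial>lborel)"
    unfolding G_lborel
    by (subst nn_integral_affine_eucl[OF m, of \<rho> "(x0, x0)"]) (use r in \<open>simp_all only: pt\<close>)
  also have "\<dots> = ennreal (\<bar>\<rho>\<bar> ^ DIM('a \<times> 'a)) * (ennreal (\<rho> powr (- ?q)) *
       gagliardo_pow s p (ball 0 1) (\<lambda>z. \<psi> (x0 + \<rho> *\<^sub>R z)))"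
  proof -
    have cc: "continuous_on (ball 0 1) (\<lambda>z. \<psi> (x0 + \<rho> *\<^sub>R z))"
      by (rule continuous_on_compose2[OF c]) (use r in \<open>auto intro!: continuous_intros simp: ball_affine_iff\<close>)
    have m2: "(\<lambda>z. indicator (ball 0 1 \<times> ball 0 1) z * ennreal (\<bar>\<psi> (x0 + \<rho> *\<^sub>R fst z) - \<psi> (x0 + \<rho> *\<^sub>R snd z)\<bar> powr p /
                 norm (fst z - snd z) powr ?q)) \<in> borel_measurable (borel :: ('a \<times> 'a) measure)"
      using G_integrand_meas[OF _ cc, of p ?q] by (simp add: lborel_prod)
    show ?thesis unfolding G_lborel
      by (subst nn_integral_cmult) (use m2 in auto)
  qed
  also have "ennreal (\<bar>\<rho>\<bar> ^ DIM('a \<times> 'a)) * (ennreal (\<rho> powr (- ?q)) * X) =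
     ennreal (\<rho> powr (real DIM('a) - s * p)) * X" for X
  proof -
    have "\<bar>\<rho>\<bar> ^ DIM('a \<times> 'a) * \<rho> powr (- ?q) = \<rho> powr (real DIM('a) - s * p)"
      using r by (simp add: powr_realpow[symmetric] powr_add[symmetric])
    then show ?thesis using r by (simp add: ennreal_mult'[symmetric] mult.assoc[symmetric] del: ennreal_mult')
  qed
  finally show ?thesis .
qed



lemma Lpow_cmult:
  fixes \<psi> :: "'a::euclidean_space \<Rightarrow> real"
  assumes S: "S \<in> sets borel" and c: "continuous_on S \<psi>"
  shows "Lpow p S (\<lambda>x. k * \<psi> x) = ennreal (\<bar>k\<bar> powr p) * Lpow p S \<psi>"
proof -
  have m: "(\<lambda>x. indicator S x * ennreal (\<bar>\<psi> x\<bar> powr p)) \<in> borel_measurable borel"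
    by (rule Lpow_meas[OF S c])
  have "Lpow p S (\<lambda>x. k * \<psi> x) = (\<integral>\<^sup>+ x. ennreal (\<bar>k\<bar> powr p) * (indicator S x * ennreal (\<bar>\<psi> x\<bar> powr p)) \<partial>lborel)"
    unfolding Lpow_def
    by (intro nn_integral_cong) (simp add: abs_mult powr_mult ennreal_mult' mult_ac)
  also have "\<dots> = ennreal (\<bar>k\<bar> powr p) * Lpow p S \<psi>"
    unfolding Lpow_def using m by (simp add: nn_integral_cmult)
  finally show ?thesis .
qed

lemma G_cmult:
  fixes \<psi> :: "'a::euclidean_space \<Rightarrow> real"
  assumes S: "S \<in> sets borel" and c: "continuous_on S \<psi>"
  shows "gagliardo_pow s p S (\<lambda>x. k * \<psi> x) = ennreal (\<bar>k\<bar> powr p) * gagliardo_pow s p S \<psi>"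
proof -
  let ?q = "real DIM('a) + s * p"
  have m: "(\<lambda>z. indicator (S \<times> S) z * ennreal (\<bar>\<psi> (fst z) - \<psi> (snd z)\<bar> powr p /
                 norm (fst z - snd z) powr ?q)) \<in> borel_measurable (lborel \<Otimes>\<^sub>M lborel)"
    by (rule G_integrand_meas[OF S c])
  have "gagliardo_pow s p S (\<lambda>x. k * \<psi> x) = (\<integral>\<^sup>+ z. ennreal (\<bar>k\<bar> powr p) * (indicator (S \<times> S) z * ennreal (\<bar>\<psi> (fst z) - \<psi> (snd z)\<bar> powr p /
                 norm (fst z - snd z) powr ?q)) \<partial>(lborel \<Otimes>\<^sub>M lborel))"
    unfolding gagliardo_pow_def
  proof (intro nn_integral_cong)
    fix z :: "'a \<times> 'a"
    have e: "\<bar>k * a - k * b\<bar> powr p / Y = \<bar>k\<bar> powr p * (\<bar>a - b\<bar> powr p / Y)" for a b Y :: real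
      by (simp add: right_diff_distrib[symmetric] abs_mult powr_mult)
    show "indicator (S \<times> S) z * ennreal (\<bar>k * \<psi> (fst z) - k * \<psi> (snd z)\<bar> powr p / norm (fst z - snd z) powr ?q) =
      ennreal (\<bar>k\<bar> powr p) * (indicator (S \<times> S) z * ennreal (\<bar>\<psi> (fst z) - \<psi> (snd z)\<bar> powr p / norm (fst z - snd z) powr ?q))"
      by (simp only: e ennreal_mult'[OF powr_ge_zero] mult_ac)
  qed
  also have "\<dots> = ennreal (\<bar>k\<bar> powr p) * gagliardo_pow s p S \<psi>"
    unfolding gagliardo_pow_def using m by (simp add: nn_integral_cmult)
  finally show ?thesis .
qed

lemma C1_cont: "C1_closure (ball c \<rho>) \<psi> \<Longrightarrow> \<rho> > 0 \<Longrightarrow> continuous_on (cball c \<rho>) \<psi>"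
  by (simp add: C1_closure_def)

lemma C1_affine:
  fixes \<psi> :: "'a::euclidean_space \<Rightarrow> real"
  assumes C: "C1_closure (ball x0 \<rho>) \<psi>" and r: "\<rho> > 0"
  shows "C1_closure (ball 0 1) (\<lambda>z. k * \<psi> (x0 + \<rho> *\<^sub>R z))"
proof -
  have cl: "closure (ball x0 \<rho>) = cball x0 \<rho>" using r by simp
  from C obtain D where cont: "continuous_on (cball x0 \<rho>) \<psi>"
    and der: "\<And>x. x \<in> ball x0 \<rho> \<Longrightarrow> (\<psi> has_derivative blinfun_apply (D x)) (at x)"
    and Dc: "continuous_on (cball x0 \<rho>) D"
    unfolding C1_closure_def cl by blast
  have img: "x0 + \<rho> *\<^sub>R z \<in> cball x0 \<rho>" if "z \<in> cball 0 1" for z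
    using that r by (simp add: dist_norm)
  have imgb: "x0 + \<rho> *\<^sub>R z \<in> ball x0 \<rho>" if "z \<in> ball 0 1" for z
    using that r by (simp add: dist_norm)
  define D' where "D' = (\<lambda>z. (k * \<rho>) *\<^sub>R D (x0 + \<rho> *\<^sub>R z))"
  have "continuous_on (cball 0 1) (\<lambda>z. k * \<psi> (x0 + \<rho> *\<^sub>R z))"
    by (intro continuous_intros continuous_on_compose2[OF cont]) (auto intro: img)
  moreover have "continuous_on (cball 0 1) D'"
    unfolding D'_def
    by (intro continuous_intros continuous_on_compose2[OF Dc]) (auto intro: img)
  moreover have "((\<lambda>z. k * \<psi> (x0 + \<rho> *\<^sub>R z)) has_derivative blinfun_apply (D' z)) (at z)"
    if z: "z \<in> ball 0 1" for z
  proof -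
    have d1: "((\<lambda>z. x0 + \<rho> *\<^sub>R z) has_derivative (\<lambda>h. \<rho> *\<^sub>R h)) (at z)"
      by (auto intro!: derivative_eq_intros)
    have d2: "(\<psi> has_derivative blinfun_apply (D (x0 + \<rho> *\<^sub>R z))) (at (x0 + \<rho> *\<^sub>R z))"
      by (rule der[OF imgb[OF z]])
    have "((\<psi> \<circ> (\<lambda>z. x0 + \<rho> *\<^sub>R z)) has_derivative (blinfun_apply (D (x0 + \<rho> *\<^sub>R z)) \<circ> (\<lambda>h. \<rho> *\<^sub>R h))) (at z)"
      using diff_chain_at[OF d1 d2] .
    then have "((\<lambda>z. k * (\<psi> \<circ> (\<lambda>z. x0 + \<rho> *\<^sub>R z)) z) has_derivative (\<lambda>h. k * (blinfun_apply (D (x0 + \<rho> *\<^sub>R z)) \<circ> (\<lambda>h. \<rho> *\<^sub>R h)) h)) (at z)"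
      by (rule has_derivative_mult_right)
    moreover have "(\<lambda>h. k * (blinfun_apply (D (x0 + \<rho> *\<^sub>R z)) \<circ> (\<lambda>h. \<rho> *\<^sub>R h)) h) = blinfun_apply (D' z)"
      by (rule ext) (simp add: D'_def blinfun.scaleR_right blinfun.scaleR_left)
    ultimately show ?thesis by (simp add: o_def)
  qed
  ultimately show ?thesis unfolding C1_closure_def closure_ball[OF zero_less_one] by blast
qed

lemma C1_sub:
  fixes \<phi> :: "'a::euclidean_space \<Rightarrow> real"
  assumes C: "C1_closure (ball x0 r) \<phi>" and sub: "ball x R \<subseteq> ball x0 r" and R: "R > 0"
  shows "C1_closure (ball x R) (\<lambda>y. \<phi> y - a)"
proof -
  from C obtain D where cont: "continuous_on (closure (ball x0 r)) \<phi>"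
    and der: "\<And>x. x \<in> ball x0 r \<Longrightarrow> (\<phi> has_derivative blinfun_apply (D x)) (at x)"
    and Dc: "continuous_on (closure (ball x0 r)) D"
    unfolding C1_closure_def by blast
  have sc: "closure (ball x R) \<subseteq> closure (ball x0 r)" by (rule closure_mono[OF sub])
  show ?thesis unfolding C1_closure_def
  proof (intro conjI exI[of _ D] ballI)
    show "continuous_on (closure (ball x R)) (\<lambda>y. \<phi> y - a)"
      by (intro continuous_intros continuous_on_subset[OF cont sc])
    show "continuous_on (closure (ball x R)) D" by (rule continuous_on_subset[OF Dc sc])
    fix y assume "y \<in> ball x R"
    then have "y \<in> ball x0 r" using sub by auto
    then show "((\<lambda>y. \<phi> y - a) has_derivative blinfun_apply (D y)) (at y)"
      using der by (auto intro!: derivative_eq_intros)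
  qed
qed

lemma C1_lipschitz:
  fixes \<psi> :: "'a::euclidean_space \<Rightarrow> real"
  assumes C: "C1_closure (ball c \<rho>) \<psi>" and r: "\<rho> > 0"
  shows "\<exists>M\<ge>0. \<forall>x\<in>ball c \<rho>. \<forall>y\<in>ball c \<rho>. \<bar>\<psi> x - \<psi> y\<bar> \<le> M * norm (x - y)"
proof -
  have cl: "closure (ball c \<rho>) = cball c \<rho>" using r by simp
  from C obtain D where der: "\<And>x. x \<in> ball c \<rho> \<Longrightarrow> (\<psi> has_derivative blinfun_apply (D x)) (at x)"
    and Dc: "continuous_on (cball c \<rho>) D"
    unfolding C1_closure_def cl by blast
  have "compact (D ` cball c \<rho>)" by (rule compact_continuous_image[OF Dc compact_cball])
  then obtain B where B: "\<And>x. x \<in> cball c \<rho> \<Longrightarrow> norm (D x) \<le> B"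
    by (meson compact_imp_bounded bounded_iff imageI)
  define M where "M = max B 0"
  have "\<bar>\<psi> x - \<psi> y\<bar> \<le> M * norm (x - y)" if "x \<in> ball c \<rho>" "y \<in> ball c \<rho>" for x y
  proof -
    have "norm (\<psi> x - \<psi> y) \<le> M * norm (x - y)"
    proof (rule differentiable_bound[OF convex_ball])
      fix z assume "z \<in> ball c \<rho>"
      then show "(\<psi> has_derivative blinfun_apply (D z)) (at z within ball c \<rho>)"
        using der has_derivative_at_withinI by blast
      from \<open>z \<in> ball c \<rho>\<close> have "norm (D z) \<le> B" using B by auto
      then show "onorm (blinfun_apply (D z)) \<le> M" by (simp add: norm_blinfun.rep_eq[symmetric] M_def)
    qed (use that in auto)
    then show ?thesis by simp
  qed
  then show ?thesis by (intro exI[of _ M]) (auto simp: M_def)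
qed

lemma cont_bounded:
  fixes \<psi> :: "'a::euclidean_space \<Rightarrow> real"
  assumes "continuous_on (cball c \<rho>) \<psi>"
  shows "\<exists>M\<ge>0. \<forall>x\<in>cball c \<rho>. \<bar>\<psi> x\<bar> \<le> M"
proof -
  have "compact (\<psi> ` cball c \<rho>)" by (rule compact_continuous_image[OF assms compact_cball])
  then obtain B where B: "\<And>x. x \<in> cball c \<rho> \<Longrightarrow> norm (\<psi> x) \<le> B"
    by (meson compact_imp_bounded bounded_iff imageI)
  then show ?thesis by (intro exI[of _ "max B 0"]) force
qed

lemma Lpow_finite:
  fixes \<psi> :: "'a::euclidean_space \<Rightarrow> real"
  assumes c: "continuous_on (cball x0 \<rho>) \<psi>" and p: "p > 0"
  shows "Lpow p (ball x0 \<rho>) \<psi> < \<infinity>"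
proof -
  obtain M where M: "M \<ge> 0" "\<And>x. x \<in> cball x0 \<rho> \<Longrightarrow> \<bar>\<psi> x\<bar> \<le> M" using cont_bounded[OF c] by blast
  have "Lpow p (ball x0 \<rho>) \<psi> \<le> (\<integral>\<^sup>+ x. ennreal (M powr p) * indicator (ball x0 \<rho>) x \<partial>lborel)"
    unfolding Lpow_def
  proof (rule nn_integral_mono)
    fix x
    show "indicator (ball x0 \<rho>) x * ennreal (\<bar>\<psi> x\<bar> powr p) \<le> ennreal (M powr p) * indicator (ball x0 \<rho>) x"
    proof (cases "x \<in> ball x0 \<rho>")
      case True
      then have "\<bar>\<psi> x\<bar> powr p \<le> M powr p" using M p by (intro powr_mono2) auto
      then show ?thesis using True by (simp add: ennreal_leI)
    qed simp
  qed
  also have "\<dots> = ennreal (M powr p) * emeasure lborel (ball x0 \<rho>)"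
    by (simp add: nn_integral_cmult_indicator)
  also have "\<dots> < \<infinity>" using emeasure_lborel_ball_finite[of x0 \<rho>] by (auto simp: ennreal_mult_less_top)
  finally show ?thesis .
qed

lemma Lpow_pos:
  fixes \<psi> :: "'a::euclidean_space \<Rightarrow> real"
  assumes c: "continuous_on (ball x0 \<rho>) \<psi>" and y: "y \<in> ball x0 \<rho>" and ny: "\<psi> y \<noteq> 0" and p: "p > 0"
  shows "Lpow p (ball x0 \<rho>) \<psi> > 0"
proof -
  define e where "e = \<bar>\<psi> y\<bar> / 2"
  have e: "e > 0" using ny by (simp add: e_def)
  obtain d where d: "d > 0" "\<And>x'. x' \<in> ball x0 \<rho> \<Longrightarrow> dist x' y < d \<Longrightarrow> dist (\<psi> x') (\<psi> y) < e"
    using c y e unfolding continuous_on_iff by blast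
  define \<delta> where "\<delta> = min d (\<rho> - dist x0 y)"
  have \<delta>: "\<delta> > 0" using d y by (simp add: \<delta>_def)
  have sub: "ball y \<delta> \<subseteq> ball x0 \<rho>"
  proof
    fix x assume "x \<in> ball y \<delta>"
    then have "dist y x < \<rho> - dist x0 y" by (simp add: \<delta>_def)
    then show "x \<in> ball x0 \<rho>" using dist_triangle[of x0 x y] by simp
  qed
  have big: "\<bar>\<psi> x\<bar> \<ge> e" if "x \<in> ball y \<delta>" for x
  proof -
    have "x \<in> ball x0 \<rho>" using sub that by auto
    moreover have "dist x y < d" using that by (simp add: \<delta>_def dist_commute)
    ultimately have "dist (\<psi> x) (\<psi> y) < e" using d(2) by blast
    then show ?thesis unfolding e_def dist_real_def by arith
  qed
  have "(\<integral>\<^sup>+ x. ennreal (e powr p) * indicator (ball y \<delta>) x \<partial>lborel) \<le> Lpow p (ball x0 \<rho>) \<psi>"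
    unfolding Lpow_def
  proof (rule nn_integral_mono)
    fix x
    show "ennreal (e powr p) * indicator (ball y \<delta>) x \<le> indicator (ball x0 \<rho>) x * ennreal (\<bar>\<psi> x\<bar> powr p)"
    proof (cases "x \<in> ball y \<delta>")
      case True
      then have "e powr p \<le> \<bar>\<psi> x\<bar> powr p"
        using big[OF True] e p by (intro powr_mono2) auto
      then show ?thesis using True sub by (auto simp: ennreal_leI)
    qed simp
  qed
  moreover have "(\<integral>\<^sup>+ x. ennreal (e powr p) * indicator (ball y \<delta>) x \<partial>lborel) > 0"
    using e \<delta> by (simp add: nn_integral_cmult_indicator emeasure_ball ennreal_mult''[symmetric] del: ennreal_mult'')
  ultimately show ?thesis by (metis less_le_trans)
qed



lemma dyadic_index:
  fixes x T :: real
  assumes T: "T > 0" and x: "0 < x" "x < T"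
  shows "\<exists>k::nat. T * 2 powr (- real (Suc k)) < x \<and> x \<le> T * 2 powr (- real k)"
proof -
  define L where "L = log 2 (T / x)"
  have L0: "L > 0" using x T by (simp add: L_def)
  define k where "k = nat \<lfloor>L\<rfloor>"
  have k1: "real k \<le> L" using L0 by (simp add: k_def)
  have k2: "L < real k + 1" using L0 by (simp add: k_def)
  have e: "2 powr L = T / x" using x T by (simp add: L_def)
  have "2 powr real k \<le> T / x" using k1 by (subst e[symmetric]) (simp)
  then have a: "x \<le> T * 2 powr (- real k)"
    using x T by (simp add: powr_minus field_simps)
  have "T / x < 2 powr (real k + 1)" using k2 by (subst e[symmetric]) (simp)
  then have "T < x * 2 powr (real k + 1)" using x by (simp add: divide_less_eq mult.commute)
  then have "T / 2 powr (real k + 1) < x" by (simp add: pos_divide_less_eq)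
  moreover have "2 powr (- real (Suc k)) = 1 / 2 powr (real k + 1)"
    using powr_minus_divide[of "2::real" "real k + 1"] by (simp add: algebra_simps)
  ultimately have b: "T * 2 powr (- real (Suc k)) < x" by simp
  show ?thesis using a b by blast
qed

lemma ennreal_term_le_suminf: "(f::nat \<Rightarrow> ennreal) k \<le> suminf f"
proof -
  have "sum f {k} \<le> suminf f" by (rule sum_le_suminf) (simp_all add: summableI)
  then show ?thesis by simp
qed

lemma J_finite:
  fixes \<alpha> T :: real
  assumes T: "T > 0" and \<alpha>: "\<alpha> < real DIM('a)"
  shows "(\<integral>\<^sup>+ u. indicator (ball (0::'a::euclidean_space) T) u * ennreal (norm u powr (- \<alpha>)) \<partial>lborel) < \<infinity>"
proof (cases "\<alpha> \<le> 0")
  case True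
  have "(\<integral>\<^sup>+ u. indicator (ball (0::'a) T) u * ennreal (norm u powr (- \<alpha>)) \<partial>lborel) \<le>
      (\<integral>\<^sup>+ u. ennreal (T powr (- \<alpha>)) * indicator (ball (0::'a) T) u \<partial>lborel)"
  proof (rule nn_integral_mono)
    fix u :: 'a
    show "indicator (ball 0 T) u * ennreal (norm u powr - \<alpha>) \<le> ennreal (T powr - \<alpha>) * indicator (ball 0 T) u"
    proof (cases "u \<in> ball 0 T")
      case True
      then have "norm u powr - \<alpha> \<le> T powr - \<alpha>"
        using \<open>\<alpha> \<le> 0\<close> by (intro powr_mono2) auto
      then show ?thesis using True by (simp add: ennreal_leI)
    qed simp
  qed
  also have "\<dots> < \<infinity>" using emeasure_lborel_ball_finite[of "0::'a" T]
    by (auto simp: nn_integral_cmult_indicator ennreal_mult_less_top)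
  finally show ?thesis .
next
  case False
  then have a0: "\<alpha> > 0" by simp
  define V where "V = unit_ball_vol (real DIM('a))"
  have V: "V > 0" by (simp add: V_def)
  define c where "c = (\<lambda>k::nat. (T * 2 powr (- real (Suc k))) powr (- \<alpha>))"
  define r where "r = (\<lambda>k::nat. T * 2 powr (- real k))"
  have r0: "r k > 0" for k using T by (simp add: r_def)
  have pt: "indicator (ball (0::'a) T) u * ennreal (norm u powr (- \<alpha>)) \<le>
      (\<Sum>k. ennreal (c k) * indicator (cball 0 (r k)) u)" for u :: 'a
  proof (cases "u \<in> ball 0 T \<and> u \<noteq> 0")
    case True
    then obtain k where k: "T * 2 powr (- real (Suc k)) < norm u" "norm u \<le> r k"
      using dyadic_index[OF T, of "norm u"] by (auto simp: r_def)
    have "norm u powr (- \<alpha>) \<le> c k"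
      unfolding c_def using k a0 T by (intro powr_mono2') auto
    then have "indicator (ball (0::'a) T) u * ennreal (norm u powr (- \<alpha>)) \<le> ennreal (c k) * indicator (cball 0 (r k)) u"
      using True k by (simp add: ennreal_leI)
    also have "\<dots> \<le> (\<Sum>k. ennreal (c k) * indicator (cball 0 (r k)) u)"
      by (rule ennreal_term_le_suminf)
    finally show ?thesis .
  next
    case False
    then show ?thesis by (auto simp: indicator_def)
  qed
  have "(\<integral>\<^sup>+ u. indicator (ball (0::'a) T) u * ennreal (norm u powr (- \<alpha>)) \<partial>lborel) \<le>
      (\<integral>\<^sup>+ u. (\<Sum>k. ennreal (c k) * indicator (cball (0::'a) (r k)) u) \<partial>lborel)"
    by (rule nn_integral_mono) (rule pt)
  also have "\<dots> = (\<Sum>k. \<integral>\<^sup>+ u. ennreal (c k) * indicator (cball (0::'a) (r k)) u \<partial>lborel)"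
    by (rule nn_integral_suminf) (intro borel_measurable_times_ennreal borel_measurable_const borel_measurable_indicator; simp)
  also have "\<dots> = (\<Sum>k. ennreal (c k * (V * r k ^ DIM('a))))"
    using r0 by (simp add: nn_integral_cmult_indicator emeasure_cball V_def less_imp_le ennreal_mult' c_def)
  also have "\<dots> = ennreal (\<Sum>k. c k * (V * r k ^ DIM('a)))"
  proof (rule suminf_ennreal2)
    show "0 \<le> c k * (V * r k ^ DIM('a))" for k using V r0 by (simp add: c_def less_imp_le)
    define K where "K = T powr (- \<alpha>) * 2 powr \<alpha> * V * T ^ DIM('a)"
    define q where "q = 2 powr (\<alpha> - real DIM('a))"
    have q: "norm q < 1" using \<alpha> powr_less_mono[of "\<alpha> - real DIM('a)" 0 "2::real"] by (simp add: q_def)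
    have "c k * (V * r k ^ DIM('a)) = K * q ^ k" for k
    proof -
      have "c k = T powr (- \<alpha>) * 2 powr (\<alpha> * real (Suc k))"
      proof -
        have "- ((- 1 - real k) * \<alpha>) = \<alpha> * (1 + real k)" by (simp add: algebra_simps)
        then show ?thesis using T by (simp add: c_def powr_mult powr_powr)
      qed
      moreover have "r k ^ DIM('a) = T ^ DIM('a) * 2 powr (- real k * real DIM('a))"
        using T by (simp add: r_def power_mult_distrib powr_realpow[symmetric] powr_powr)
      moreover have "q ^ k = 2 powr ((\<alpha> - real DIM('a)) * real k)"
        by (simp add: q_def powr_realpow[symmetric] powr_powr)
      ultimately show ?thesis
        by (simp add: K_def powr_add[symmetric] algebra_simps)
    qed
    then show "summable (\<lambda>k. c k * (V * r k ^ DIM('a)))"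
      using summable_mult[OF summable_geometric[OF q], of K] by (simp add: mult.commute)
  qed
  also have "\<dots> < \<infinity>" by simp
  finally show ?thesis .
qed



lemma G_finite:
  fixes \<psi> :: "'a::euclidean_space \<Rightarrow> real"
  assumes C: "C1_closure (ball c \<rho>) \<psi>" and r: "\<rho> > 0" and s: "s < 1" and p: "p > 0"
  shows "gagliardo_pow s p (ball c \<rho>) \<psi> < \<infinity>"
proof -
  define q where "q = real DIM('a) + s * p"
  define \<alpha> where "\<alpha> = q - p"
  have \<alpha>: "\<alpha> < real DIM('a)" using s p by (simp add: \<alpha>_def q_def mult_less_cancel_right2 mult.commute)
  obtain M where M: "M \<ge> 0" "\<And>x y. x \<in> ball c \<rho> \<Longrightarrow> y \<in> ball c \<rho> \<Longrightarrow> \<bar>\<psi> x - \<psi> y\<bar> \<le> M * norm (x - y)"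
    using C1_lipschitz[OF C r] by blast
  let ?B = "ball c \<rho>"
  define J where "J = (\<integral>\<^sup>+ u. indicator (ball (0::'a) (2 * \<rho>)) u * ennreal (norm u powr (- \<alpha>)) \<partial>lborel)"
  have J: "J < \<infinity>" unfolding J_def by (rule J_finite) (use r \<alpha> in auto)
  define f where "f = (\<lambda>z::'a \<times> 'a. indicator (?B \<times> ?B) z * ennreal (M powr p * norm (fst z - snd z) powr (- \<alpha>)))"
  have fm[measurable]: "f \<in> borel_measurable (lborel \<Otimes>\<^sub>M lborel)" unfolding f_def by measurable
  have "gagliardo_pow s p ?B \<psi> \<le> (\<integral>\<^sup>+ z. f z \<partial>(lborel \<Otimes>\<^sub>M lborel))"
    unfolding gagliardo_pow_def q_def[symmetric]
  proof (rule nn_integral_mono)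
    fix z :: "'a \<times> 'a"
    obtain a b where z: "z = (a, b)" by (cases z)
    show "indicator (?B \<times> ?B) z * ennreal (\<bar>\<psi> (fst z) - \<psi> (snd z)\<bar> powr p / norm (fst z - snd z) powr q) \<le> f z"
    proof (cases "a \<in> ?B \<and> b \<in> ?B \<and> a \<noteq> b")
      case True
      then have n: "norm (a - b) > 0" by simp
      have "\<bar>\<psi> a - \<psi> b\<bar> powr p \<le> (M * norm (a - b)) powr p"
        using M(2)[of a b] True p by (intro powr_mono2) auto
      also have "\<dots> = M powr p * norm (a - b) powr p" using M n by (simp add: powr_mult)
      finally have "\<bar>\<psi> a - \<psi> b\<bar> powr p / norm (a - b) powr q \<le> M powr p * norm (a - b) powr p / norm (a - b) powr q"
        by (rule divide_right_mono) simp
      also have "\<dots> = M powr p * norm (a - b) powr (- \<alpha>)"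
        by (simp add: \<alpha>_def powr_diff)
      finally show ?thesis using True by (simp add: z f_def ennreal_leI)
    next
      case False
      then show ?thesis by (auto simp: z f_def indicator_def)
    qed
  qed
  also have "\<dots> = (\<integral>\<^sup>+ x. \<integral>\<^sup>+ y. f (x, y) \<partial>lborel \<partial>lborel)"
    by (rule lborel.nn_integral_fst[symmetric]) simp
  also have "\<dots> \<le> (\<integral>\<^sup>+ x. (ennreal (M powr p) * J) * indicator ?B x \<partial>lborel)"
  proof (rule nn_integral_mono)
    fix x :: 'a
    show "(\<integral>\<^sup>+ y. f (x, y) \<partial>lborel) \<le> (ennreal (M powr p) * J) * indicator ?B x"
    proof (cases "x \<in> ?B")
      case False
      then show ?thesis by (simp add: f_def)
    next
      case True
      have m1: "(\<lambda>y. f (x, y)) \<in> borel_measurable borel" by measurable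
      have "(\<integral>\<^sup>+ y. f (x, y) \<partial>lborel) = ennreal (\<bar>1\<bar> ^ DIM('a)) * (\<integral>\<^sup>+ u. f (x, x + 1 *\<^sub>R u) \<partial>lborel)"
        by (rule nn_integral_affine_eucl[OF m1]) simp
      also have "\<dots> = (\<integral>\<^sup>+ u. f (x, x + u) \<partial>lborel)" by simp
      also have "\<dots> \<le> (\<integral>\<^sup>+ u. ennreal (M powr p) * (indicator (ball (0::'a) (2 * \<rho>)) u * ennreal (norm u powr (- \<alpha>))) \<partial>lborel)"
      proof (rule nn_integral_mono)
        fix u :: 'a
        show "f (x, x + u) \<le> ennreal (M powr p) * (indicator (ball (0::'a) (2 * \<rho>)) u * ennreal (norm u powr (- \<alpha>)))"
        proof (cases "x + u \<in> ?B")
          case True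
          have "norm u < 2 * \<rho>"
          proof -
            have "norm u = dist x (x + u)" by (simp add: dist_norm)
            also have "\<dots> \<le> dist x c + dist c (x + u)" by (rule dist_triangle)
            also have "\<dots> < 2 * \<rho>" using \<open>x \<in> ?B\<close> True by (simp add: dist_commute)
            finally show ?thesis .
          qed
          then show ?thesis using True \<open>x \<in> ?B\<close> M
            by (simp add: f_def ennreal_mult' indicator_def)
        next
          case False
          then show ?thesis by (simp add: f_def)
        qed
      qed
      also have "\<dots> = ennreal (M powr p) * J"
      proof -
        have [measurable]: "ball (0::'a) (2 * \<rho>) \<in> sets borel" by simp
        show ?thesis unfolding J_def by (rule nn_integral_cmult) measurable
      qed
      finally show ?thesis using True by simp
    qed
  qed
  also have "\<dots> = (ennreal (M powr p) * J) * emeasure lborel ?B"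
    by (rule nn_integral_cmult_indicator) simp
  also have "\<dots> < \<infinity>" using J emeasure_lborel_ball_finite[of c \<rho>]
    by (simp add: ennreal_mult_less_top)
  finally show ?thesis .
qed



definition adm_set :: "real \<Rightarrow> real \<Rightarrow> 'a::euclidean_space itself \<Rightarrow> real set" where
  "adm_set s p _ = {gagliardo s p (ball (0::'a) 1) \<phi> powr p | \<phi>.
       C1_closure (ball (0::'a) 1) \<phi> \<and> Lp_norm p (ball (0::'a) 1) \<phi> = 1 \<and> \<phi> 0 = 0}"

lemma Lambda_adm: "Lambda s p (0::'a::euclidean_space) 1 = Inf (adm_set s p TYPE('a))"
  by (simp add: Lambda_def adm_set_def)

lemma gag_pow: "p > 0 \<Longrightarrow> gagliardo s p S \<psi> powr p = enn2real (gagliardo_pow s p S \<psi>)"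
  by (simp add: gagliardo_def powr_powr)

lemma K_adm:
  fixes \<psi> :: "'a::euclidean_space \<Rightarrow> real"
  assumes p: "p > 0" and C: "C1_closure (ball c \<rho>) \<psi>" and r: "\<rho> > 0" and z: "\<psi> c = 0"
    and L: "enn2real (Lpow p (ball c \<rho>) \<psi>) > 0"
  shows "\<rho> powr (s * p) * enn2real (gagliardo_pow s p (ball c \<rho>) \<psi>) / enn2real (Lpow p (ball c \<rho>) \<psi>)
          \<in> adm_set s p TYPE('a)"
proof -
  let ?N = "DIM('a)"
  define L where "L = enn2real (Lpow p (ball c \<rho>) \<psi>)"
  define g where "g = enn2real (gagliardo_pow s p (ball c \<rho>) \<psi>)"
  define \<eta>0 where "\<eta>0 = (\<lambda>z. \<psi> (c + \<rho> *\<^sub>R z))"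
  define k where "k = (\<rho> ^ ?N / L) powr (1 / p)"
  define \<eta> where "\<eta> = (\<lambda>z. k * \<eta>0 z)"
  have L0: "L > 0" using L by (simp add: L_def)
  have k0: "k > 0" using L0 r by (simp add: k_def)
  have kp: "\<bar>k\<bar> powr p = \<rho> ^ ?N / L" using k0 L0 r p by (simp add: k_def powr_powr)
  have cb: "continuous_on (cball c \<rho>) \<psi>" by (rule C1_cont[OF C r])
  have cbb: "continuous_on (ball c \<rho>) \<psi>" by (rule continuous_on_subset[OF cb]) auto
  have c0: "continuous_on (cball 0 1) \<eta>0" unfolding \<eta>0_def
    by (intro continuous_on_compose2[OF cb] continuous_intros) (use r in \<open>auto simp: dist_norm\<close>)
  have c0b: "continuous_on (ball 0 1) \<eta>0" by (rule continuous_on_subset[OF c0]) auto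
  have eL: "L = \<rho> ^ ?N * enn2real (Lpow p (ball 0 1) \<eta>0)"
    unfolding L_def Lpow_scale[OF r cbb] \<eta>0_def using r by (simp add: enn2real_mult)
  have eG: "g = \<rho> powr (real ?N - s * p) * enn2real (gagliardo_pow s p (ball 0 1) \<eta>0)"
    unfolding g_def G_scale[OF r cbb] \<eta>0_def using r by (simp add: enn2real_mult)
  have "enn2real (Lpow p (ball 0 1) \<eta>) = \<bar>k\<bar> powr p * enn2real (Lpow p (ball 0 1) \<eta>0)"
    unfolding \<eta>_def by (subst Lpow_cmult[OF _ c0b]) (simp_all add: enn2real_mult)
  also have "\<dots> = 1"
  proof -
    have "enn2real (Lpow p (ball 0 1) \<eta>0) \<noteq> 0" using eL L0 by auto
    then show ?thesis unfolding kp using eL L0 r by (simp add: field_simps)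
  qed
  finally have Lone: "Lp_norm p (ball 0 1) \<eta> = 1" by (simp add: Lp_norm_Lpow)
  have "gagliardo s p (ball 0 1) \<eta> powr p = enn2real (gagliardo_pow s p (ball 0 1) \<eta>)"
    by (rule gag_pow[OF p])
  also have "\<dots> = \<bar>k\<bar> powr p * enn2real (gagliardo_pow s p (ball 0 1) \<eta>0)"
    unfolding \<eta>_def by (subst G_cmult[OF _ c0b]) (simp_all add: enn2real_mult)
  also have "\<dots> = \<rho> powr (s * p) * g / L"
  proof -
    have "\<rho> powr (s * p) * g = \<rho> powr (s * p) * \<rho> powr (real ?N - s * p) * enn2real (gagliardo_pow s p (ball 0 1) \<eta>0)"
      by (simp add: eG)
    also have "\<rho> powr (s * p) * \<rho> powr (real ?N - s * p) = \<rho> ^ ?N"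
      using r by (simp add: powr_add[symmetric] powr_realpow)
    finally show ?thesis unfolding kp using L0 by (simp add: field_simps)
  qed
  finally have Geq: "gagliardo s p (ball 0 1) \<eta> powr p = \<rho> powr (s * p) * g / L" .
  have "C1_closure (ball 0 1) \<eta>" unfolding \<eta>_def \<eta>0_def by (rule C1_affine[OF C r])
  moreover have "\<eta> 0 = 0" by (simp add: \<eta>_def \<eta>0_def z)
  ultimately show ?thesis unfolding adm_set_def using Lone Geq
    by (auto simp: L_def g_def intro!: exI[of _ \<eta>])
qed

lemma adm_nonneg: "x \<in> adm_set s p TYPE('a::euclidean_space) \<Longrightarrow> x \<ge> 0"
  by (auto simp: adm_set_def)

lemma K_ineq:
  fixes \<psi> :: "'a::euclidean_space \<Rightarrow> real"
  assumes p: "p > 0" and C: "C1_closure (ball c \<rho>) \<psi>" and r: "\<rho> > 0" and z: "\<psi> c = 0"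
  shows "Lambda s p (0::'a) 1 * enn2real (Lpow p (ball c \<rho>) \<psi>) \<le>
      \<rho> powr (s * p) * enn2real (gagliardo_pow s p (ball c \<rho>) \<psi>)"
proof (cases "enn2real (Lpow p (ball c \<rho>) \<psi>) > 0")
  case True
  let ?L = "enn2real (Lpow p (ball c \<rho>) \<psi>)"
  let ?v = "\<rho> powr (s * p) * enn2real (gagliardo_pow s p (ball c \<rho>) \<psi>) / ?L"
  have "?v \<in> adm_set s p TYPE('a)" by (rule K_adm[OF p C r z True])
  then have "Lambda s p (0::'a) 1 \<le> ?v"
    unfolding Lambda_adm by (rule cInf_lower) (auto intro: bdd_belowI adm_nonneg)
  then show ?thesis using True by (simp add: le_divide_eq)
next
  case False
  then have "enn2real (Lpow p (ball c \<rho>) \<psi>) = 0" using enn2real_nonneg[of "Lpow p (ball c \<rho>) \<psi>"] by linarith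
  then show ?thesis by simp
qed



lemma pair_split_ind:
  fixes A B :: "'a set"
  shows "ennreal (indicator (A \<times> B) (y, z) * X) = ennreal (indicator A y * X) * indicator B z"
  by (auto simp: indicator_def)

lemma Lpow_sub_mono:
  "S \<subseteq> T \<Longrightarrow> Lpow p S \<psi> \<le> Lpow p T \<psi>"
  unfolding Lpow_def by (intro nn_integral_mono) (auto simp: indicator_def)

lemma chain_step:
  fixes \<eta> :: "'a::euclidean_space \<Rightarrow> real"
  assumes p: "p > 1" and s: "0 < s" "s < 1"
    and C: "C1_closure (ball (0::'a) 1) \<eta>"
  defines "r \<equiv> (\<lambda>k::nat. 2 powr (- real k))"
  defines "V \<equiv> unit_ball_vol (real DIM('a))"
  defines "P \<equiv> (\<lambda>k. enn2real (Lpow p (ball (0::'a) (r k)) \<eta>))"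
  defines "g \<equiv> enn2real (gagliardo_pow s p (ball (0::'a) 1) \<eta>)"
  shows "(V * r (Suc k) ^ DIM('a) * P k) powr (1/p) \<le> (V * r k ^ DIM('a) * P (Suc k)) powr (1/p)
           + ((2 * r k) powr (real DIM('a) + s * p) * g) powr (1/p)"
proof -
  let ?N = "DIM('a)"
  let ?q = "real DIM('a) + s * p"
  let ?B = "\<lambda>k. ball (0::'a) (r k)"
  have r0: "r k > 0" for k by (simp add: r_def)
  have r1: "r k \<le> 1" for k using powr_mono[of "- real k" 0 "2::real"] by (simp add: r_def)
  have rS: "r (Suc k) \<le> r k" for k using powr_mono[of "- real (Suc k)" "- real k" "2::real"] by (simp add: r_def)
  have V0: "V > 0" by (simp add: V_def)
  have Bsub: "?B k \<subseteq> ball 0 1" for k using r1[of k] by auto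
  have cc: "continuous_on (cball 0 1) \<eta>" by (rule C1_cont[OF C]) simp
  define \<eta>r where "\<eta>r = (\<lambda>x. if x \<in> ball (0::'a) 1 then \<eta> x else 0)"
  have [measurable]: "\<eta>r \<in> borel_measurable borel" unfolding \<eta>r_def
    by (rule restrict_meas) (auto intro: continuous_on_subset[OF cc])
  have [measurable]: "?B k \<in> sets borel" for k by simp
  have em: "emeasure lborel (?B k) = ennreal (V * r k ^ ?N)" for k
    using r0[of k] by (simp add: emeasure_ball V_def)
  define I where "I = (\<lambda>z::'a \<times> 'a. indicator (?B k \<times> ?B (Suc k)) z :: real)"
  have [measurable]: "I \<in> borel_measurable (lborel \<Otimes>\<^sub>M lborel)" unfolding I_def by measurable
  define f where "f = (\<lambda>z. I z * \<bar>\<eta>r (fst z)\<bar>)"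
  define G where "G = (\<lambda>z. I z * \<bar>\<eta>r (snd z)\<bar>)"
  define H where "H = (\<lambda>z. I z * \<bar>\<eta>r (fst z) - \<eta>r (snd z)\<bar>)"
  have [measurable]: "G \<in> borel_measurable (lborel \<Otimes>\<^sub>M lborel)" unfolding G_def by measurable
  have [measurable]: "H \<in> borel_measurable (lborel \<Otimes>\<^sub>M lborel)" unfolding H_def by measurable
  have [measurable]: "f \<in> borel_measurable (lborel \<Otimes>\<^sub>M lborel)" unfolding f_def by measurable
  have I01: "I z = 0 \<or> I z = 1" for z by (simp add: I_def indicator_def)
  have Ipow: "(I z * X) powr p = I z * X powr p" for z X using I01[of z] by auto
  have Lr: "Lpow p (?B j) \<eta> = (\<integral>\<^sup>+ x. indicator (?B j) x * ennreal (\<bar>\<eta>r x\<bar> powr p) \<partial>lborel)" for j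
    unfolding Lpow_def using Bsub[of j] by (intro nn_integral_cong) (auto simp: \<eta>r_def indicator_def)
  have Lfin: "Lpow p (?B j) \<eta> < \<infinity>" for j
  proof -
    have "continuous_on (cball 0 (r j)) \<eta>" by (rule continuous_on_subset[OF cc]) (use r1[of j] in auto)
    then show ?thesis by (rule Lpow_finite) (use p in simp)
  qed
  have intf: "(\<integral>\<^sup>+ z. ennreal (f z powr p) \<partial>(lborel \<Otimes>\<^sub>M lborel)) = Lpow p (?B k) \<eta> * ennreal (V * r (Suc k) ^ ?N)"
  proof -
    have "(\<integral>\<^sup>+ z. ennreal (f z powr p) \<partial>(lborel \<Otimes>\<^sub>M lborel)) =
        (\<integral>\<^sup>+ y. \<integral>\<^sup>+ z. ennreal (f (y, z) powr p) \<partial>lborel \<partial>lborel)"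
      by (rule lborel.nn_integral_fst[symmetric]) measurable
    also have "\<dots> = (\<integral>\<^sup>+ y. ennreal (indicator (?B k) y * \<bar>\<eta>r y\<bar> powr p) * emeasure lborel (?B (Suc k)) \<partial>lborel)"
    proof (intro nn_integral_cong)
      fix y :: 'a
      have "(\<integral>\<^sup>+ z. ennreal (f (y, z) powr p) \<partial>lborel) =
          (\<integral>\<^sup>+ z. ennreal (indicator (?B k) y * \<bar>\<eta>r y\<bar> powr p) * indicator (?B (Suc k)) z \<partial>lborel)"
        by (intro nn_integral_cong) (simp add: f_def Ipow I_def indicator_def)
      also have "\<dots> = ennreal (indicator (?B k) y * \<bar>\<eta>r y\<bar> powr p) * emeasure lborel (?B (Suc k))"
        by (rule nn_integral_cmult_indicator) simp
      finally show "(\<integral>\<^sup>+ z. ennreal (f (y, z) powr p) \<partial>lborel) = ennreal (indicator (?B k) y * \<bar>\<eta>r y\<bar> powr p) * emeasure lborel (?B (Suc k))" .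
    qed
    also have "\<dots> = Lpow p (?B k) \<eta> * ennreal (V * r (Suc k) ^ ?N)"
      unfolding Lr em
      by (subst nn_integral_multc) (auto simp: ennreal_mult' ennreal_indicator)
    finally show ?thesis .
  qed
  have intG: "(\<integral>\<^sup>+ z. ennreal (G z powr p) \<partial>(lborel \<Otimes>\<^sub>M lborel)) = ennreal (V * r k ^ ?N) * Lpow p (?B (Suc k)) \<eta>"
  proof -
    have "(\<integral>\<^sup>+ z. ennreal (G z powr p) \<partial>(lborel \<Otimes>\<^sub>M lborel)) =
        (\<integral>\<^sup>+ y. \<integral>\<^sup>+ z. ennreal (G (y, z) powr p) \<partial>lborel \<partial>lborel)"
      by (rule lborel.nn_integral_fst[symmetric]) measurable
    also have "\<dots> = (\<integral>\<^sup>+ y. Lpow p (?B (Suc k)) \<eta> * indicator (?B k) y \<partial>lborel)"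
    proof (intro nn_integral_cong)
      fix y :: 'a
      have "(\<integral>\<^sup>+ z. ennreal (G (y, z) powr p) \<partial>lborel) =
          (\<integral>\<^sup>+ z. indicator (?B k) y * (indicator (?B (Suc k)) z * ennreal (\<bar>\<eta>r z\<bar> powr p)) \<partial>lborel)"
        by (intro nn_integral_cong) (simp add: G_def Ipow I_def indicator_def)
      also have "\<dots> = indicator (?B k) y * Lpow p (?B (Suc k)) \<eta>"
        unfolding Lr by (rule nn_integral_cmult) measurable
      finally show "(\<integral>\<^sup>+ z. ennreal (G (y, z) powr p) \<partial>lborel) = Lpow p (?B (Suc k)) \<eta> * indicator (?B k) y"
        by (simp add: mult.commute)
    qed
    also have "\<dots> = Lpow p (?B (Suc k)) \<eta> * emeasure lborel (?B k)"
      by (rule nn_integral_cmult_indicator) simp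
    also have "\<dots> = ennreal (V * r k ^ ?N) * Lpow p (?B (Suc k)) \<eta>"
      by (simp add: em mult.commute)
    finally show ?thesis .
  qed
  have Gfin: "gagliardo_pow s p (ball (0::'a) 1) \<eta> < \<infinity>"
    by (rule G_finite[OF C]) (use s p in auto)
  have intH: "(\<integral>\<^sup>+ z. ennreal (H z powr p) \<partial>(lborel \<Otimes>\<^sub>M lborel)) \<le> ennreal ((2 * r k) powr ?q) * gagliardo_pow s p (ball (0::'a) 1) \<eta>"
  proof -
    have "(\<integral>\<^sup>+ z. ennreal (H z powr p) \<partial>(lborel \<Otimes>\<^sub>M lborel)) \<le>
        (\<integral>\<^sup>+ z. ennreal ((2 * r k) powr ?q) * (indicator (ball 0 1 \<times> ball 0 1) z *
          ennreal (\<bar>\<eta> (fst z) - \<eta> (snd z)\<bar> powr p / norm (fst z - snd z) powr ?q)) \<partial>(lborel \<Otimes>\<^sub>M lborel))"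
    proof (rule nn_integral_mono)
      fix z :: "'a \<times> 'a"
      obtain y w where z: "z = (y, w)" by (cases z)
      show "ennreal (H z powr p) \<le> ennreal ((2 * r k) powr ?q) * (indicator (ball 0 1 \<times> ball 0 1) z *
          ennreal (\<bar>\<eta> (fst z) - \<eta> (snd z)\<bar> powr p / norm (fst z - snd z) powr ?q))"
      proof (cases "y \<in> ?B k \<and> w \<in> ?B (Suc k) \<and> y \<noteq> w")
        case True
        then have yw: "y \<in> ball 0 1" "w \<in> ball 0 1" using Bsub[of k] Bsub[of "Suc k"] by blast+
        have n0: "norm (y - w) > 0" using True by simp
        have "norm (y - w) \<le> norm y + norm w" by (rule norm_triangle_ineq4)
        also have "\<dots> < 2 * r k" using True rS[of k] by auto
        finally have n2: "norm (y - w) < 2 * r k" .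
        have "\<bar>\<eta> y - \<eta> w\<bar> powr p = norm (y - w) powr ?q * (\<bar>\<eta> y - \<eta> w\<bar> powr p / norm (y - w) powr ?q)"
          using n0 by simp
        also have "\<dots> \<le> (2 * r k) powr ?q * (\<bar>\<eta> y - \<eta> w\<bar> powr p / norm (y - w) powr ?q)"
          using n2 n0 s p by (intro mult_right_mono powr_mono2) auto
        finally have ineq: "\<bar>\<eta> y - \<eta> w\<bar> powr p \<le> (2 * r k) powr ?q * (\<bar>\<eta> y - \<eta> w\<bar> powr p / norm (y - w) powr ?q)" .
        have hz: "H z powr p = \<bar>\<eta> y - \<eta> w\<bar> powr p" using True yw by (simp add: z H_def I_def \<eta>r_def)
        have iz: "indicator (ball 0 1 \<times> ball 0 1) z = (1::ennreal)" using yw by (simp add: z)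
        have "ennreal (H z powr p) \<le> ennreal ((2 * r k) powr ?q * (\<bar>\<eta> y - \<eta> w\<bar> powr p / norm (y - w) powr ?q))"
          unfolding hz by (rule ennreal_leI[OF ineq])
        also have "\<dots> = ennreal ((2 * r k) powr ?q) * ennreal (\<bar>\<eta> y - \<eta> w\<bar> powr p / norm (y - w) powr ?q)"
          by (rule ennreal_mult') simp
        finally show ?thesis unfolding iz by (simp add: z)
      next
        case False
        then show ?thesis by (auto simp: z H_def I_def indicator_def)
      qed
    qed
    also have "\<dots> = ennreal ((2 * r k) powr ?q) * gagliardo_pow s p (ball (0::'a) 1) \<eta>"
      unfolding gagliardo_pow_def
      by (rule nn_integral_cmult) (rule G_integrand_meas[OF _ continuous_on_subset[OF cc]]; auto)
    finally show ?thesis .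
  qed
  have Hfin: "(\<integral>\<^sup>+ z. ennreal (H z powr p) \<partial>(lborel \<Otimes>\<^sub>M lborel)) < \<infinity>"
  proof -
    have "ennreal ((2 * r k) powr ?q) * gagliardo_pow s p (ball (0::'a) 1) \<eta> < \<infinity>"
      using Gfin by (simp add: ennreal_mult_less_top)
    with intH show ?thesis by (rule le_less_trans)
  qed
  have Gfin2: "(\<integral>\<^sup>+ z. ennreal (G z powr p) \<partial>(lborel \<Otimes>\<^sub>M lborel)) < \<infinity>"
    unfolding intG using Lfin[of "Suc k"] by (simp add: ennreal_mult_less_top)
  have mk: "enn2real (\<integral>\<^sup>+ z. ennreal (f z powr p) \<partial>(lborel \<Otimes>\<^sub>M lborel)) powr (1/p) \<le>
      enn2real (\<integral>\<^sup>+ z. ennreal (G z powr p) \<partial>(lborel \<Otimes>\<^sub>M lborel)) powr (1/p) +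
      enn2real (\<integral>\<^sup>+ z. ennreal (H z powr p) \<partial>(lborel \<Otimes>\<^sub>M lborel)) powr (1/p)"
  proof (rule conjunct2[OF minkowski_nn])
    show "1 \<le> p" using p by simp
    fix z :: "'a \<times> 'a"
    show "0 \<le> f z \<and> f z \<le> G z + H z"
      using I01[of z] abs_triangle_ineq4[of "\<eta>r (snd z)" "\<eta>r (fst z)"]
      by (auto simp: f_def G_def H_def abs_minus_commute)
    show "0 \<le> G z" "0 \<le> H z" using I01[of z] by (auto simp: G_def H_def)
  qed (use Gfin2 Hfin in auto)
  have "enn2real (\<integral>\<^sup>+ z. ennreal (H z powr p) \<partial>(lborel \<Otimes>\<^sub>M lborel)) \<le> (2 * r k) powr ?q * g"
  proof -
    have "enn2real (\<integral>\<^sup>+ z. ennreal (H z powr p) \<partial>(lborel \<Otimes>\<^sub>M lborel)) \<le>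
        enn2real (ennreal ((2 * r k) powr ?q) * gagliardo_pow s p (ball (0::'a) 1) \<eta>)"
      by (rule enn2real_mono[OF intH]) (use Gfin in \<open>simp add: ennreal_mult_less_top\<close>)
    then show ?thesis by (simp add: enn2real_mult g_def)
  qed
  then have "enn2real (\<integral>\<^sup>+ z. ennreal (H z powr p) \<partial>(lborel \<Otimes>\<^sub>M lborel)) powr (1/p) \<le> ((2 * r k) powr ?q * g) powr (1/p)"
    using p by (intro powr_mono2) auto
  moreover have "enn2real (\<integral>\<^sup>+ z. ennreal (f z powr p) \<partial>(lborel \<Otimes>\<^sub>M lborel)) = V * r (Suc k) ^ ?N * P k"
    unfolding intf P_def using V0 r0[of "Suc k"] by (simp add: enn2real_mult mult.commute)
  moreover have "enn2real (\<integral>\<^sup>+ z. ennreal (G z powr p) \<partial>(lborel \<Otimes>\<^sub>M lborel)) = V * r k ^ ?N * P (Suc k)"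
    unfolding intG P_def using V0 r0[of k] by (simp add: enn2real_mult)
  ultimately show ?thesis using mk by simp
qed



lemma ratio_comp:
  fixes N :: nat and q V :: real and k :: nat
  assumes V: "V > 0"
  defines "r \<equiv> (\<lambda>k::nat. 2 powr (- real k))"
  shows "(2 * r k) powr q = (2 powr (q + real N) / V^2) * (2 powr (2 * real N - q)) ^ k * ((V * r k ^ N) * (V * r (Suc k) ^ N))"
proof -
  have rk: "r j ^ N = 2 powr (- real j * real N)" for j
    by (simp add: r_def powr_realpow[symmetric] powr_powr)
  have tk: "(2 * r k) powr q = 2 powr ((1 - real k) * q)"
  proof -
    have "2 * r k = 2 powr (1 - real k)" by (simp add: r_def powr_diff powr_minus_divide)
    then show ?thesis by (simp add: powr_powr)
  qed
  have bk: "(2 powr (2 * real N - q)) ^ k = 2 powr (real k * (2 * real N - q))"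
    by (simp add: powr_realpow[symmetric] powr_powr mult.commute)
  have "(2 powr (q + real N) / V^2) * (2 powr (2 * real N - q)) ^ k * ((V * r k ^ N) * (V * r (Suc k) ^ N))
      = 2 powr (q + real N) * 2 powr (real k * (2 * real N - q)) * 2 powr (- real k * real N) * 2 powr (- real (Suc k) * real N)"
    unfolding bk rk using V by (simp add: power2_eq_square field_simps)
  also have "\<dots> = 2 powr ((q + real N) + real k * (2 * real N - q) + (- real k * real N) + (- real (Suc k) * real N))"
    by (simp only: powr_add)
  also have "(q + real N) + real k * (2 * real N - q) + (- real k * real N) + (- real (Suc k) * real N) = (1 - real k) * q"
    by (simp add: algebra_simps)
  finally show ?thesis using tk by simp
qed

lemma adm_lower:
  fixes s p :: real
  assumes s: "0 < s" "s < 1" and p: "p > 1" and sp: "s * p > real DIM('a)"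
  shows "\<exists>c0>0. \<forall>x\<in>adm_set s p TYPE('a::euclidean_space). c0 \<le> x"
proof -
  let ?N = "DIM('a)"
  define q where "q = real ?N + s * p"
  define V where "V = unit_ball_vol (real ?N)"
  have V0: "V > 0" by (simp add: V_def)
  define r where "r = (\<lambda>k::nat. 2 powr (- real k))"
  have r0: "r k > 0" for k by (simp add: r_def)
  have r1: "r k \<le> 1" for k using powr_mono[of "- real k" 0 "2::real"] by (simp add: r_def)
  define K0 where "K0 = 2 powr (q + real ?N) / V^2"
  have K0: "K0 > 0" using V0 by (simp add: K0_def)
  define \<beta> where "\<beta> = 2 powr (2 * real ?N - q)"
  have \<beta>0: "\<beta> > 0" by (simp add: \<beta>_def)
  have \<beta>1: "\<beta> < 1" using sp powr_less_mono[of "2 * real ?N - q" 0 "2::real"] by (simp add: \<beta>_def q_def)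
  define \<theta> where "\<theta> = \<beta> powr (1/p)"
  have \<theta>0: "\<theta> > 0" using \<beta>0 by (simp add: \<theta>_def)
  have \<theta>1: "\<theta> < 1" using powr_less_mono2[of "1/p" \<beta> 1] \<beta>0 \<beta>1 p by (simp add: \<theta>_def)
  define c1 where "c1 = (1 - \<theta>) * (1 / V) powr (1/p) / K0 powr (1/p)"
  have c1: "c1 > 0" using \<theta>1 V0 K0 by (simp add: c1_def)
  show ?thesis
  proof (intro exI[of _ "c1 powr p"] conjI ballI)
    show "c1 powr p > 0" using c1 by simp
    fix x assume "x \<in> adm_set s p TYPE('a)"
    then obtain \<eta> where x: "x = gagliardo s p (ball (0::'a) 1) \<eta> powr p"
      and C: "C1_closure (ball (0::'a) 1) \<eta>" and n1: "Lp_norm p (ball (0::'a) 1) \<eta> = 1" and e0: "\<eta> 0 = 0"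
      unfolding adm_set_def by blast
    define P where "P = (\<lambda>k. enn2real (Lpow p (ball (0::'a) (r k)) \<eta>))"
    define g where "g = enn2real (gagliardo_pow s p (ball (0::'a) 1) \<eta>)"
    have P0: "P k \<ge> 0" for k by (simp add: P_def)
    have g0: "g \<ge> 0" by (simp add: g_def)
    define a where "a = (\<lambda>k. (P k / (V * r k ^ ?N)) powr (1/p))"
    define E where "E = (K0 * g) powr (1/p)"
    have step: "a k \<le> a (Suc k) + E * \<theta> ^ k" for k
    proof -
      have cs: "(V * r (Suc k) ^ ?N * P k) powr (1/p) \<le> (V * r k ^ ?N * P (Suc k)) powr (1/p)
           + ((2 * r k) powr q * g) powr (1/p)"
        using chain_step[OF p s C, of k] unfolding P_def g_def r_def V_def q_def by simp
      define mk where "mk = V * r k ^ ?N"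
      define ml where "ml = V * r (Suc k) ^ ?N"
      have mk0: "mk > 0" "ml > 0" using V0 r0 by (simp_all add: mk_def ml_def)
      have rc: "(2 * r k) powr q = K0 * \<beta> ^ k * (mk * ml)"
        unfolding mk_def ml_def K0_def \<beta>_def r_def by (rule ratio_comp[OF V0])
      define c where "c = (mk * ml) powr (1/p)"
      have c0: "c > 0" using mk0 by (simp add: c_def)
      have ak: "a k = (P k / mk) powr (1/p)" by (simp add: a_def mk_def)
      have ak1: "a (Suc k) = (P (Suc k) / ml) powr (1/p)" by (simp add: a_def ml_def)
      have e1: "(ml * P k) powr (1/p) = c * a k"
        unfolding ak using mk0 P0[of k] by (simp add: c_def powr_mult powr_divide field_simps)
      have e2: "(mk * P (Suc k)) powr (1/p) = c * a (Suc k)"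
        unfolding ak1 using mk0 P0[of "Suc k"] by (simp add: c_def powr_mult powr_divide field_simps)
      have e3: "((2 * r k) powr q * g) powr (1/p) = c * (E * \<theta> ^ k)"
      proof -
        have "((2 * r k) powr q * g) powr (1/p) = ((K0 * g) * \<beta> ^ k * (mk * ml)) powr (1/p)"
          unfolding rc by (simp add: mult_ac)
        also have "\<dots> = (K0 * g) powr (1/p) * (\<beta> ^ k) powr (1/p) * c"
          using K0 g0 \<beta>0 mk0 by (simp add: c_def powr_mult)
        also have "(\<beta> ^ k) powr (1/p) = \<theta> ^ k"
          using \<beta>0 by (simp add: \<theta>_def powr_realpow[symmetric] powr_powr mult.commute)
        finally show ?thesis by (simp add: E_def mult_ac)
      qed
      have "c * a k \<le> c * a (Suc k) + c * (E * \<theta> ^ k)"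
        using cs unfolding e1[unfolded ml_def] e2[unfolded mk_def] e3 by simp
      then show ?thesis using c0 by (simp add: distrib_left[symmetric])
    qed
    have tele: "a 0 \<le> a n + E * (\<Sum>k<n. \<theta> ^ k)" for n
    proof (induction n)
      case 0 then show ?case by simp
    next
      case (Suc n)
      then show ?case using step[of n] by (simp add: distrib_left)
    qed
    have E0: "E \<ge> 0" by (simp add: E_def)
    have gs: "(\<Sum>k<n. \<theta> ^ k) \<le> 1 / (1 - \<theta>)" for n
    proof -
      have "(\<Sum>k<n. \<theta> ^ k) = (1 - \<theta> ^ n) / (1 - \<theta>)" using \<theta>1 by (simp add: sum_gp_strict)
      also have "\<dots> \<le> 1 / (1 - \<theta>)" using \<theta>1 \<theta>0 by (intro divide_right_mono) auto
      finally show ?thesis .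
    qed
    have small: "\<exists>n. a n \<le> \<epsilon>" if \<epsilon>: "\<epsilon> > 0" for \<epsilon>
    proof -
      have cc: "continuous_on (cball 0 1) \<eta>" by (rule C1_cont[OF C]) simp
      obtain d where d: "d > 0" "\<And>x. x \<in> cball 0 1 \<Longrightarrow> dist x 0 < d \<Longrightarrow> dist (\<eta> x) (\<eta> 0) < \<epsilon>"
        using cc \<epsilon> unfolding continuous_on_iff by (metis centre_in_cball zero_le_one)
      obtain n where n: "(1/2::real) ^ n < d" using real_arch_pow_inv[OF d(1), of "1/2"] by auto
      have rn: "r n = (1/2) ^ n" by (simp add: r_def powr_minus_divide powr_realpow power_one_over)
      have bnd: "\<bar>\<eta> x\<bar> \<le> \<epsilon>" if "x \<in> ball 0 (r n)" for x
      proof -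
        have "x \<in> cball 0 1" using that r1[of n] by auto
        moreover have "dist x 0 < d" using that n rn by (simp add: dist_norm)
        ultimately show ?thesis using d(2)[of x] e0 by (simp add: dist_real_def)
      qed
      have "Lpow p (ball 0 (r n)) \<eta> \<le> (\<integral>\<^sup>+ x. ennreal (\<epsilon> powr p) * indicator (ball (0::'a) (r n)) x \<partial>lborel)"
        unfolding Lpow_def
      proof (rule nn_integral_mono)
        fix x :: 'a
        show "indicator (ball 0 (r n)) x * ennreal (\<bar>\<eta> x\<bar> powr p) \<le> ennreal (\<epsilon> powr p) * indicator (ball 0 (r n)) x"
        proof (cases "x \<in> ball 0 (r n)")
          case True
          then have "\<bar>\<eta> x\<bar> powr p \<le> \<epsilon> powr p" using bnd[OF True] p by (intro powr_mono2) auto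
          then show ?thesis using True by (simp add: ennreal_leI)
        qed simp
      qed
      also have "\<dots> = ennreal (\<epsilon> powr p * (V * r n ^ ?N))"
        using r0[of n] V0 by (simp add: nn_integral_cmult_indicator emeasure_ball V_def ennreal_mult')
      finally have "P n \<le> \<epsilon> powr p * (V * r n ^ ?N)"
        unfolding P_def using V0 r0[of n] by (intro enn2real_leI) auto
      then have "P n / (V * r n ^ ?N) \<le> \<epsilon> powr p" using V0 r0[of n] by (simp add: divide_le_eq)
      then have "a n \<le> (\<epsilon> powr p) powr (1/p)" unfolding a_def using P0[of n] V0 r0[of n] p
        by (intro powr_mono2) auto
      also have "\<dots> = \<epsilon>" using \<epsilon> p by (simp add: powr_powr)
      finally show ?thesis by blast
    qed
    have a0le: "a 0 \<le> E / (1 - \<theta>)"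
    proof (rule field_le_epsilon)
      fix \<epsilon> :: real assume "\<epsilon> > 0"
      then obtain n where n: "a n \<le> \<epsilon>" using small by blast
      have "a 0 \<le> a n + E * (\<Sum>k<n. \<theta> ^ k)" by (rule tele)
      also have "\<dots> \<le> \<epsilon> + E * (1 / (1 - \<theta>))" using n gs[of n] E0 by (intro add_mono mult_left_mono) auto
      finally show "a 0 \<le> E / (1 - \<theta>) + \<epsilon>" by simp
    qed
    have P1: "P 0 = 1"
    proof -
      have "P 0 powr (1/p) = 1" using n1 by (simp add: P_def r_def Lp_norm_Lpow)
      then have "(P 0 powr (1/p)) powr p = 1" by simp
      then show ?thesis using P0[of 0] p by (simp add: powr_powr)
    qed
    have "a 0 = (1 / V) powr (1/p)" by (simp add: a_def P1 r_def)
    then have "(1 / V) powr (1/p) \<le> (K0 powr (1/p) * g powr (1/p)) / (1 - \<theta>)"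
      using a0le K0 g0 by (simp add: E_def powr_mult)
    then have "c1 \<le> g powr (1/p)"
      using \<theta>1 K0 by (simp add: c1_def field_simps)
    then have "c1 powr p \<le> (g powr (1/p)) powr p" using c1 p by (intro powr_mono2) auto
    also have "\<dots> = g" using g0 p by (simp add: powr_powr)
    also have "g = x" unfolding x g_def using p by (simp add: gag_pow)
    finally show "c1 powr p \<le> x" .
  qed
qed

lemma Lambda_pos:
  fixes s p :: real
  assumes s: "0 < s" "s < 1" and p: "p > 1" and sp: "s * p > real DIM('a)"
    and ne: "adm_set s p TYPE('a::euclidean_space) \<noteq> {}"
  shows "Lambda s p (0::'a) 1 > 0"
proof -
  obtain c0 where c0: "c0 > 0" "\<And>x. x \<in> adm_set s p TYPE('a) \<Longrightarrow> c0 \<le> x"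
    using adm_lower[OF s p sp] by blast
  have "c0 \<le> Inf (adm_set s p TYPE('a))" by (rule cInf_greatest[OF ne c0(2)])
  then show ?thesis using c0(1) by (simp add: Lambda_adm)
qed



lemma omega_eq: "omega TYPE('a::euclidean_space) = unit_ball_vol (real DIM('a))"
  by (simp add: omega_def measure_def emeasure_ball)

lemma G_shift: "gagliardo_pow s p S (\<lambda>y. \<phi> y - a) = gagliardo_pow s p S \<phi>"
  by (simp add: gagliardo_pow_def)

lemma G_sub_mono: "S \<subseteq> T \<Longrightarrow> gagliardo_pow s p S \<phi> \<le> gagliardo_pow s p T \<phi>"
  unfolding gagliardo_pow_def by (intro nn_integral_mono) (auto simp: indicator_def)

theorem lemma4p1:
  fixes s p r :: real and x0 :: "'a::euclidean_space" and \<phi> :: "'a \<Rightarrow> real"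
  assumes "0 < s" "s < 1" "1 < p" "s * p > real DIM('a)"
    and "r > 0" and "C1_closure (ball x0 r) \<phi>" and "\<phi> x0 = 0"
  shows "\<forall>x\<in>ball x0 r. \<bar>\<phi> x\<bar> \<le>
     (1 / (omega TYPE('a) * Lambda s p (0::'a) 1)) powr (1 / p) *
     (((r - dist x x0) powr s + r powr s) / (r - dist x x0) powr (real DIM('a) / p)) *
     gagliardo s p (ball x0 r) \<phi>"
proof
  note s = assms(1,2) and p = assms(3) and sp = assms(4) and r = assms(5) and C = assms(6) and z = assms(7)
  fix x assume xb: "x \<in> ball x0 r"
  let ?N = "DIM('a)"
  let ?\<Lambda> = "Lambda s p (0::'a) 1"
  define R where "R = r - dist x x0"
  have R: "R > 0" using xb by (simp add: R_def dist_commute)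
  define V where "V = unit_ball_vol (real ?N)"
  have V0: "V > 0" by (simp add: V_def)
  have p0: "p > 0" using p by simp
  define RHS where "RHS = (1 / (omega TYPE('a) * ?\<Lambda>)) powr (1 / p) *
     ((R powr s + r powr s) / R powr (real ?N / p)) * gagliardo s p (ball x0 r) \<phi>"
  have RHS0: "RHS \<ge> 0" unfolding RHS_def by (intro mult_nonneg_nonneg divide_nonneg_nonneg) (auto simp: gagliardo_def)
  show "\<bar>\<phi> x\<bar> \<le> (1 / (omega TYPE('a) * ?\<Lambda>)) powr (1 / p) *
     (((r - dist x x0) powr s + r powr s) / (r - dist x x0) powr (real DIM('a) / p)) *
     gagliardo s p (ball x0 r) \<phi>"
  proof (cases "\<phi> x = 0")
    case True
    then show ?thesis using RHS0 by (simp add: RHS_def R_def)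
  next
    case False
    have cb: "continuous_on (cball x0 r) \<phi>" by (rule C1_cont[OF C r])
    have cbb: "continuous_on (ball x0 r) \<phi>" by (rule continuous_on_subset[OF cb]) auto
    have subB: "ball x R \<subseteq> ball x0 r"
    proof
      fix y assume "y \<in> ball x R"
      then have "dist x y < R" by simp
      then show "y \<in> ball x0 r" using dist_triangle[of x0 y x] by (simp add: R_def dist_commute)
    qed
    have subC: "cball x R \<subseteq> cball x0 r"
    proof
      fix y assume "y \<in> cball x R"
      then have "dist x y \<le> R" by simp
      then show "y \<in> cball x0 r" using dist_triangle[of x0 y x] by (simp add: R_def dist_commute)
    qed
    define L\<phi> where "L\<phi> = enn2real (Lpow p (ball x0 r) \<phi>)"
    define g where "g = enn2real (gagliardo_pow s p (ball x0 r) \<phi>)"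
    have g0: "g \<ge> 0" by (simp add: g_def)
    have Lfin: "Lpow p (ball x0 r) \<phi> < \<infinity>" by (rule Lpow_finite[OF cb p0])
    have Gfin: "gagliardo_pow s p (ball x0 r) \<phi> < \<infinity>" by (rule G_finite[OF C r s(2) p0])
    have Lpos: "Lpow p (ball x0 r) \<phi> > 0" by (rule Lpow_pos[OF cbb xb False p0])
    have L\<phi>0: "L\<phi> > 0" using Lfin Lpos by (simp add: L\<phi>_def enn2real_positive_iff)
    have ne: "adm_set s p TYPE('a) \<noteq> {}" using K_adm[OF p0 C r z, of s] L\<phi>0 by (auto simp: L\<phi>_def)
    have \<Lambda>0: "?\<Lambda> > 0" by (rule Lambda_pos[OF s p sp ne])
    have K1: "?\<Lambda> * L\<phi> \<le> r powr (s * p) * g"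
      unfolding L\<phi>_def g_def by (rule K_ineq[OF p0 C r z])
    define \<psi> where "\<psi> = (\<lambda>y. \<phi> y - \<phi> x)"
    have C\<psi>: "C1_closure (ball x R) \<psi>" unfolding \<psi>_def by (rule C1_sub[OF C subB R])
    define L\<psi> where "L\<psi> = enn2real (Lpow p (ball x R) \<psi>)"
    have K2: "?\<Lambda> * L\<psi> \<le> R powr (s * p) * enn2real (gagliardo_pow s p (ball x R) \<psi>)"
      unfolding L\<psi>_def by (rule K_ineq[OF p0 C\<psi> R]) (simp add: \<psi>_def)
    have "enn2real (gagliardo_pow s p (ball x R) \<psi>) \<le> g"
      unfolding g_def \<psi>_def G_shift by (rule enn2real_mono[OF G_sub_mono[OF subB]]) (use Gfin in simp)
    then have K2': "?\<Lambda> * L\<psi> \<le> R powr (s * p) * g"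
      using K2 by (meson mult_left_mono order_trans powr_ge_zero)
    define \<phi>r where "\<phi>r = (\<lambda>y. if y \<in> ball x0 r then \<phi> y else 0)"
    have [measurable]: "\<phi>r \<in> borel_measurable borel" unfolding \<phi>r_def by (rule restrict_meas[OF _ cbb]) simp
    have [measurable]: "ball x R \<in> sets borel" by simp
    define F where "F = (\<lambda>y. indicator (ball x R) y * \<bar>\<phi> x\<bar>)"
    define G1 where "G1 = (\<lambda>y. indicator (ball x R) y * \<bar>\<phi>r y\<bar>)"
    define H where "H = (\<lambda>y. indicator (ball x R) y * \<bar>\<phi>r y - \<phi> x\<bar>)"
    have [measurable]: "G1 \<in> borel_measurable lborel" unfolding G1_def by measurable
    have [measurable]: "H \<in> borel_measurable lborel" unfolding H_def by measurable
    have ind01: "indicator (ball x R) y = (0::real) \<or> indicator (ball x R) y = (1::real)" for y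
      by (simp add: indicator_def)
    have ipow: "(indicator (ball x R) y * X) powr p = indicator (ball x R) y * X powr p" for y and X :: real
      using ind01[of y] by auto
    have intG1: "(\<integral>\<^sup>+ y. ennreal (G1 y powr p) \<partial>lborel) = Lpow p (ball x R) \<phi>"
      unfolding Lpow_def G1_def ipow using subB
      by (intro nn_integral_cong) (auto simp: \<phi>r_def indicator_def)
    have intH: "(\<integral>\<^sup>+ y. ennreal (H y powr p) \<partial>lborel) = Lpow p (ball x R) \<psi>"
      unfolding Lpow_def H_def ipow using subB
      by (intro nn_integral_cong) (auto simp: \<phi>r_def \<psi>_def indicator_def)
    have intF: "(\<integral>\<^sup>+ y. ennreal (F y powr p) \<partial>lborel) = ennreal (\<bar>\<phi> x\<bar> powr p * (V * R ^ ?N))"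
    proof -
      have "(\<integral>\<^sup>+ y. ennreal (F y powr p) \<partial>lborel) = (\<integral>\<^sup>+ y. ennreal (\<bar>\<phi> x\<bar> powr p) * indicator (ball x R) y \<partial>lborel)"
        unfolding F_def ipow by (intro nn_integral_cong) (simp add: indicator_def)
      also have "\<dots> = ennreal (\<bar>\<phi> x\<bar> powr p) * emeasure lborel (ball x R)"
        by (rule nn_integral_cmult_indicator) simp
      also have "\<dots> = ennreal (\<bar>\<phi> x\<bar> powr p * (V * R ^ ?N))"
        using R V0 by (simp add: emeasure_ball V_def ennreal_mult')
      finally show ?thesis .
    qed
    have LsubFin: "Lpow p (ball x R) \<phi> < \<infinity>"
      using Lpow_sub_mono[OF subB, of p \<phi>] Lfin by (meson le_less_trans)
    have L\<psi>fin: "Lpow p (ball x R) \<psi> < \<infinity>"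
    proof -
      have "continuous_on (cball x R) \<psi>" unfolding \<psi>_def
        by (intro continuous_intros continuous_on_subset[OF cb subC])
      then show ?thesis by (rule Lpow_finite[OF _ p0])
    qed
    have mk: "enn2real (\<integral>\<^sup>+ y. ennreal (F y powr p) \<partial>lborel) powr (1/p) \<le>
        enn2real (\<integral>\<^sup>+ y. ennreal (G1 y powr p) \<partial>lborel) powr (1/p) +
        enn2real (\<integral>\<^sup>+ y. ennreal (H y powr p) \<partial>lborel) powr (1/p)"
    proof (rule conjunct2[OF minkowski_nn])
      show "1 \<le> p" using p by simp
      fix y :: 'a
      show "0 \<le> F y \<and> F y \<le> G1 y + H y"
        using ind01[of y] abs_triangle_ineq4[of "\<phi>r y" "\<phi> x"]
        by (auto simp: F_def G1_def H_def abs_minus_commute)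
      show "0 \<le> G1 y" "0 \<le> H y" using ind01[of y] by (auto simp: G1_def H_def)
    qed (use intG1 intH LsubFin L\<psi>fin in auto)
    have Lsub: "enn2real (Lpow p (ball x R) \<phi>) \<le> L\<phi>"
      unfolding L\<phi>_def by (rule enn2real_mono[OF Lpow_sub_mono[OF subB]]) (use Lfin in simp)
    have "(\<bar>\<phi> x\<bar> powr p * (V * R ^ ?N)) powr (1/p) \<le> L\<phi> powr (1/p) + L\<psi> powr (1/p)"
    proof -
      have "enn2real (Lpow p (ball x R) \<phi>) powr (1/p) \<le> L\<phi> powr (1/p)"
        using Lsub p by (intro powr_mono2) auto
      then show ?thesis using mk V0 R unfolding intF intG1 intH L\<psi>_def by simp
    qed
    also have "L\<phi> powr (1/p) \<le> r powr s * (g / ?\<Lambda>) powr (1/p)"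
    proof -
      have "L\<phi> \<le> r powr (s * p) * g / ?\<Lambda>" using K1 \<Lambda>0 by (simp add: le_divide_eq mult.commute)
      then have "L\<phi> powr (1/p) \<le> (r powr (s * p) * g / ?\<Lambda>) powr (1/p)"
        using L\<phi>0 p by (intro powr_mono2) auto
      also have "\<dots> = r powr s * (g / ?\<Lambda>) powr (1/p)"
        using r g0 \<Lambda>0 p by (simp add: powr_mult powr_divide powr_powr)
      finally show ?thesis .
    qed
    also have "L\<psi> powr (1/p) \<le> R powr s * (g / ?\<Lambda>) powr (1/p)"
    proof -
      have L\<psi>0: "L\<psi> \<ge> 0" by (simp add: L\<psi>_def)
      have "L\<psi> \<le> R powr (s * p) * g / ?\<Lambda>" using K2' \<Lambda>0 by (simp add: le_divide_eq mult.commute)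
      then have "L\<psi> powr (1/p) \<le> (R powr (s * p) * g / ?\<Lambda>) powr (1/p)"
        using L\<psi>0 p by (intro powr_mono2) auto
      also have "\<dots> = R powr s * (g / ?\<Lambda>) powr (1/p)"
        using R g0 \<Lambda>0 p by (simp add: powr_mult powr_divide powr_powr)
      finally show ?thesis .
    qed
    finally have main: "(\<bar>\<phi> x\<bar> powr p * (V * R ^ ?N)) powr (1/p) \<le> (r powr s + R powr s) * (g / ?\<Lambda>) powr (1/p)"
      by (simp add: distrib_right)
    have lhs: "(\<bar>\<phi> x\<bar> powr p * (V * R ^ ?N)) powr (1/p) = \<bar>\<phi> x\<bar> * (V powr (1/p) * R powr (real ?N / p))"
      using V0 R p by (simp add: powr_mult powr_powr powr_realpow[symmetric])
    have pos: "V powr (1/p) * R powr (real ?N / p) > 0" using V0 R by simp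
    have "\<bar>\<phi> x\<bar> \<le> (r powr s + R powr s) * (g / ?\<Lambda>) powr (1/p) / (V powr (1/p) * R powr (real ?N / p))"
      using main pos unfolding lhs by (simp add: le_divide_eq)
    also have "\<dots> = RHS"
      unfolding RHS_def omega_eq V_def[symmetric] gagliardo_def g_def[symmetric]
      using V0 \<Lambda>0 R g0 by (simp add: powr_mult powr_divide field_simps)
    finally show ?thesis by (simp add: RHS_def R_def)
  qed
qed


end
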